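(* Let $t\in\mathbb{N}_+$ and let $I\colon T_{\mathrm{Graph}}\leadsto T$ be an open interpretation. Then $$\pi^t_I=\begin{cases}\displaystyle\prod_{j=1}^{t-1}\Bigl(1-\frac{j}{\chi(I)-1}\Bigr), & \text{if } \chi(I)\ge 2,\\[2mm] -\infty, & \text{if } \chi(I)\le 1,\end{cases}$$ where, when $\chi(I)=\infty$, the product is interpreted as $1$ (each factor equals $1$), and the empty product (for $t=1$) equals $1$.
   Context: All languages are finite first-order relational languages; each predicate symbol $P$ has an arity $k(P)\in\mathbb{N}_+$. All structures are finite and canonical, i.e. no predicate holds on a tuple with a repeated entry. For a structure $K$, $V(K)$ is its vertex set, $(V)_k$ denotes the set of injective maps $[k]\to V$, and $R_P(K)\subseteq (V(K))_{k(P)}$ is the set of tuples satisfying $P$. A theory is canonical if it is universal (axiomatized by universal formulas) and entails, for each $P$, that $P$ fails on tuples with a repeated entry; all theories are canonical. $\mathcal{M}_n[T]$ is the set of models of $T$ on $n$ vertices up to isomorphism. $T_{\mathrm{Graph}}$ is the theory in the language $\{E\}$ ($E$ binary) whose models are simple graphs ($R_E$ = ordered pairs of adjacent vertices). An open interpretation $I\colon T_1\leadsto T_2$ (of a theory $T_1$ over $\mathcal{L}_1$ in a theory $T_2$ over $\mathcal{L}_2$) assigns to each predicate symbol $P(x_1,\dots,x_k)$ of $\mathcal{L}_1$ a quantifier-free formula $I(P)(x_1,\dots,x_k)$ of $\mathcal{L}_2$, extended to quantifier-free formulas by commuting with connectives, such that for every axiom $\forall\vec x\,F(\vec x)$ of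 $T_1$ we have $T_2\vdash\forall\vec x\, I(F)(\vec x)$. For a model $M$ of $T_2$, $I(M)$ is the model of $T_1$ with $V(I(M))=V(M)$ and $R_P(I(M))=\{\alpha\in(V(M))_{k(P)}: M\models I(P)(\alpha_1,\dots,\alpha_{k(P)})\}$. $K_t$ is the complete graph on $t$ vertices; $T_{n,\ell}$ is the Turán graph: the complete $\ell$-partite graph on $n$ vertices with parts of sizes $\lfloor n/\ell\rfloor$ or $\lceil n/\ell\rceil$. For graphs $G,H$, $G\subseteq H$ means there is an injection $V(G)\to V(H)$ mapping edges to edges. For models $M,N$ with $|M|\le |N|$, $p(M,N)$ is the number of $|M|$-subsets $U\subseteq V(N)$ with $N|_U\cong M$ divided by $\binom{|N|}{|M|}$. The $t$-Turán density is $\pi^t_I=\lim_{n\to\infty}\sup_{N\in\mathcal{M}_n[T]}p(K_t,I(N))$ (with $\sup\varnothing=-\infty$; the sequence is non-increasing for $n\ge t$). The abstract chromatic number is $$\chi(I)=\sup\bigl(\{\ell\in\mathbb{N}_+:\forall n\in\mathbb{N}\ \exists N\in\mathcal{M}_n[T],\ T_{n,\ell}\subseteq I(N)\}\cup\{0\}\bigr)+1\in\mathbb{N}_+\cup\{\infty\}.$$ *)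

theory Defs
  imports Complex_Main "HOL-Library.Extended_Real" "HOL-Library.Extended_Nat"
begin

datatype 'p qf =
    Atom 'p "nat list"
  | Eq nat nat
  | Neg "'p qf"
  | Conj "'p qf" "'p qf"

definition language :: "('p::finite \<Rightarrow> nat) \<Rightarrow> bool" where
  "language ar \<longleftrightarrow> (\<forall>P. ar P > 0)"

fun fv :: "'p qf \<Rightarrow> nat set" where
  "fv (Atom P xs) = set xs"
| "fv (Eq i j) = {i, j}"
| "fv (Neg f) = fv f"
| "fv (Conj f g) = fv f \<union> fv g"

fun wf_qf :: "('p \<Rightarrow> nat) \<Rightarrow> 'p qf \<Rightarrow> bool" where
  "wf_qf ar (Atom P xs) = (length xs = ar P)"
| "wf_qf ar (Eq i j) = True"
| "wf_qf ar (Neg f) = wf_qf ar f"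
| "wf_qf ar (Conj f g) = (wf_qf ar f \<and> wf_qf ar g)"

fun subst :: "(nat \<Rightarrow> nat) \<Rightarrow> 'p qf \<Rightarrow> 'p qf" where
  "subst \<sigma> (Atom P xs) = Atom P (map \<sigma> xs)"
| "subst \<sigma> (Eq i j) = Eq (\<sigma> i) (\<sigma> j)"
| "subst \<sigma> (Neg f) = Neg (subst \<sigma> f)"
| "subst \<sigma> (Conj f g) = Conj (subst \<sigma> f) (subst \<sigma> g)"

text \<open>A structure: vertex set V and, for each predicate P, the set R_P of tuples
  (lists of length ar P) satisfying P.\<close>

type_synonym ('p, 'v) struc = "'v set \<times> ('p \<Rightarrow> 'v list set)"

definition is_struc :: "('p \<Rightarrow> nat) \<Rightarrow> ('p, 'v) struc \<Rightarrow> bool" where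
  "is_struc ar M \<longleftrightarrow> (\<forall>P. \<forall>xs \<in> snd M P. length xs = ar P \<and> set xs \<subseteq> fst M)"

fun sat :: "('p, 'v) struc \<Rightarrow> (nat \<Rightarrow> 'v) \<Rightarrow> 'p qf \<Rightarrow> bool" where
  "sat M \<rho> (Atom P xs) = (map \<rho> xs \<in> snd M P)"
| "sat M \<rho> (Eq i j) = (\<rho> i = \<rho> j)"
| "sat M \<rho> (Neg f) = (\<not> sat M \<rho> f)"
| "sat M \<rho> (Conj f g) = (sat M \<rho> f \<and> sat M \<rho> g)"

text \<open>A universal theory is a set of quantifier-free formulas, each read as
  its universal closure.\<close>

definition is_model :: "('p \<Rightarrow> nat) \<Rightarrow> 'p qf set \<Rightarrow> ('p, 'v) struc \<Rightarrow> bool" where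
  "is_model ar T M \<longleftrightarrow> is_struc ar M \<and>
     (\<forall>f \<in> T. \<forall>\<rho>. range \<rho> \<subseteq> fst M \<longrightarrow> sat M \<rho> f)"

text \<open>Semantic entailment of a universal sentence (over all countable structures;
  by completeness and downward Loewenheim-Skolem this is provability).\<close>

definition entails :: "('p \<Rightarrow> nat) \<Rightarrow> 'p qf set \<Rightarrow> 'p qf \<Rightarrow> bool" where
  "entails ar T f \<longleftrightarrow>
     (\<forall>M :: ('p, nat) struc. is_model ar T M \<longrightarrow> (\<forall>\<rho>. range \<rho> \<subseteq> fst M \<longrightarrow> sat M \<rho> f))"

definition canonical_theory :: "('p \<Rightarrow> nat) \<Rightarrow> 'p qf set \<Rightarrow> bool" where
  "canonical_theory ar T \<longleftrightarrow> (\<forall>f \<in> T. wf_qf ar f) \<and>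
     (\<forall>P i j. i < j \<and> j < ar P \<longrightarrow>
        entails ar T (Neg (Conj (Eq i j) (Atom P [0..<ar P]))))"

fun translate :: "('p1 \<Rightarrow> 'p2 qf) \<Rightarrow> 'p1 qf \<Rightarrow> 'p2 qf" where
  "translate I (Atom P xs) = subst (\<lambda>i. xs ! i) (I P)"
| "translate I (Eq i j) = Eq i j"
| "translate I (Neg f) = Neg (translate I f)"
| "translate I (Conj f g) = Conj (translate I f) (translate I g)"

definition open_interp ::
  "('p1 \<Rightarrow> nat) \<Rightarrow> ('p2 \<Rightarrow> nat) \<Rightarrow> 'p1 qf set \<Rightarrow> 'p2 qf set \<Rightarrow> ('p1 \<Rightarrow> 'p2 qf) \<Rightarrow> bool" where
  "open_interp ar1 ar2 T1 T2 I \<longleftrightarrow>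
     (\<forall>P. wf_qf ar2 (I P) \<and> fv (I P) \<subseteq> {..<ar1 P}) \<and>
     (\<forall>F \<in> T1. entails ar2 T2 (translate I F))"

definition interp :: "('p1 \<Rightarrow> nat) \<Rightarrow> ('p1 \<Rightarrow> 'p2 qf) \<Rightarrow> ('p2, 'v) struc \<Rightarrow> ('p1, 'v) struc" where
  "interp ar1 I M = (fst M, \<lambda>P. {xs. length xs = ar1 P \<and> distinct xs \<and> set xs \<subseteq> fst M \<and>
                                       sat M (\<lambda>i. xs ! i) (I P)})"

text \<open>Language of graphs: a single binary predicate E (the unique element of unit).\<close>

definition ar_graph :: "unit \<Rightarrow> nat" where
  "ar_graph P = 2"

definition T_Graph :: "unit qf set" where
  "T_Graph = {Neg (Atom () [0, 0]), Neg (Conj (Atom () [0, 1]) (Neg (Atom () [1, 0])))}"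

definition complete_graph :: "nat \<Rightarrow> (unit, nat) struc" where
  "complete_graph t = ({0..<t}, \<lambda>_. {[a, b] | a b. a < t \<and> b < t \<and> a \<noteq> b})"

text \<open>Turan graph: complete l-partite graph on n vertices, parts = residue classes mod l
  (sizes floor(n/l) or ceil(n/l)).\<close>

definition turan_graph :: "nat \<Rightarrow> nat \<Rightarrow> (unit, nat) struc" where
  "turan_graph n l = ({0..<n}, \<lambda>_. {[a, b] | a b. a < n \<and> b < n \<and> a mod l \<noteq> b mod l})"

definition subgraph :: "(unit, 'v) struc \<Rightarrow> (unit, 'w) struc \<Rightarrow> bool" where
  "subgraph G H \<longleftrightarrow> (\<exists>f. inj_on f (fst G) \<and> f ` fst G \<subseteq> fst H \<and>
      (\<forall>a b. [a, b] \<in> snd G () \<longrightarrow> [f a, f b] \<in> snd H ()))"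

definition restrict_struc :: "('p, 'v) struc \<Rightarrow> 'v set \<Rightarrow> ('p, 'v) struc" where
  "restrict_struc N U = (U, \<lambda>P. {xs \<in> snd N P. set xs \<subseteq> U})"

definition isomorphic :: "('p, 'v) struc \<Rightarrow> ('p, 'w) struc \<Rightarrow> bool" where
  "isomorphic M N \<longleftrightarrow> (\<exists>f. bij_betw f (fst M) (fst N) \<and>
      (\<forall>P xs. set xs \<subseteq> fst M \<longrightarrow> (xs \<in> snd M P \<longleftrightarrow> map f xs \<in> snd N P)))"

definition ind_density :: "('p, 'v) struc \<Rightarrow> ('p, 'w) struc \<Rightarrow> real" where
  "ind_density M N =
     real (card {U. U \<subseteq> fst N \<and> card U = card (fst M) \<and> isomorphic (restrict_struc N U) M})
     / real (card (fst N) choose card (fst M))"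

text \<open>M_n[T], represented by the models on vertex set {0..<n} (one representative per
  isomorphism class suffices for all quantities below, which are isomorphism-invariant).\<close>

definition models_n :: "('p \<Rightarrow> nat) \<Rightarrow> 'p qf set \<Rightarrow> nat \<Rightarrow> ('p, nat) struc set" where
  "models_n ar T n = {M. is_model ar T M \<and> fst M = {0..<n}}"

definition turan_seq :: "('p \<Rightarrow> nat) \<Rightarrow> 'p qf set \<Rightarrow> (unit \<Rightarrow> 'p qf) \<Rightarrow> nat \<Rightarrow> nat \<Rightarrow> ereal" where
  "turan_seq ar T I t n =
     Sup ((\<lambda>N. ereal (ind_density (complete_graph t) (interp ar_graph I N))) ` models_n ar T n)"

definition chi :: "('p \<Rightarrow> nat) \<Rightarrow> 'p qf set \<Rightarrow> (unit \<Rightarrow> 'p qf) \<Rightarrow> enat" where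
  "chi ar T I = Sup (insert 0 (enat ` {l. l \<ge> 1 \<and>
       (\<forall>n. \<exists>N \<in> models_n ar T n. subgraph (turan_graph n l) (interp ar_graph I N))})) + 1"

end

theory Submission
  imports Defs "HOL-Library.FuncSet"
begin


definition esym :: "'a set \<Rightarrow> nat \<Rightarrow> ('a \<Rightarrow> real) \<Rightarrow> real" where
  "esym S k x = (\<Sum>K\<in>{K. K \<subseteq> S \<and> card K = k}. \<Prod>v\<in>K. x v)"

definition tswap :: "'a \<Rightarrow> 'a \<Rightarrow> 'a \<Rightarrow> 'a" where
  "tswap a b v = (if v = a then b else if v = b then a else v)"

lemma tswap_inv: "tswap a b (tswap a b v) = v"
  by (auto simp: tswap_def)

lemma tswap_img_inv: "tswap a b ` (tswap a b ` K) = K"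
  by (simp add: image_comp comp_def tswap_inv)

lemma tswap_inj: "inj (tswap a b)"
  by (metis injI tswap_inv)

lemma tswap_card: "card (tswap a b ` K) = card K"
  by (rule card_image) (rule inj_on_subset[OF tswap_inj], simp)

lemma tswap_sub: "a \<in> S \<Longrightarrow> b \<in> S \<Longrightarrow> K \<subseteq> S \<Longrightarrow> tswap a b ` K \<subseteq> S"
  by (auto simp: tswap_def)

lemma swap_sum_le:
  fixes x x' :: "'a \<Rightarrow> real"
  assumes fin: "finite F" and closed: "\<And>K. K \<in> F \<Longrightarrow> tswap a b ` K \<in> F"
    and finK: "\<And>K. K \<in> F \<Longrightarrow> finite K"
    and ab: "a \<noteq> b"
    and nonneg: "\<And>v. x v \<ge> 0"
    and upd: "\<And>v. v \<noteq> a \<Longrightarrow> v \<noteq> b \<Longrightarrow> x' v = x v"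
    and sum: "x' a + x' b = x a + x b" and prod: "x' a * x' b \<ge> x a * x b"
  shows "(\<Sum>K\<in>F. \<Prod>v\<in>K. x v) \<le> (\<Sum>K\<in>F. \<Prod>v\<in>K. x' v)"
proof -
  let ?t = "\<lambda>K. tswap a b ` K"
  have bij: "bij_betw ?t F F"
    by (rule bij_betw_byWitness[where f' = ?t]) (auto simp: closed tswap_img_inv)
  have re: "\<And>g::'a set \<Rightarrow> real. (\<Sum>K\<in>F. g (?t K)) = (\<Sum>K\<in>F. g K)"
    using sum.reindex_bij_betw[OF bij] by blast
  have trm: "(\<Prod>v\<in>K. x v) + (\<Prod>v\<in>?t K. x v) \<le> (\<Prod>v\<in>K. x' v) + (\<Prod>v\<in>?t K. x' v)"
    if K: "K \<in> F" for K
  proof -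
    have fK: "finite K" using finK K .
    have eqr: "(\<Prod>v\<in>K - {a, b}. x v) = (\<Prod>v\<in>K - {a, b}. x' v)"
      by (rule prod.cong) (auto simp: upd)
    have P0: "(\<Prod>v\<in>K - {a, b}. x v) \<ge> 0" by (simp add: prod_nonneg nonneg)
    have split: "(\<Prod>v\<in>L. y v) = (if a \<in> L then y a else 1) * (if b \<in> L then y b else 1) * (\<Prod>v\<in>L - {a, b}. y v)"
      if "finite L" for L and y :: "'a \<Rightarrow> real"
    proof -
      have "(\<Prod>v\<in>L. y v) = (\<Prod>v\<in>L \<inter> {a,b}. y v) * (\<Prod>v\<in>L - {a, b}. y v)"
        using that by (rule prod.Int_Diff)
      moreover have "(\<Prod>v\<in>L \<inter> {a,b}. y v) = (if a \<in> L then y a else 1) * (if b \<in> L then y b else 1)"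
        using ab by (cases "a \<in> L"; cases "b \<in> L") (auto simp: Int_insert_right)
      ultimately show ?thesis by simp
    qed
    have tK: "?t K - {a, b} = K - {a, b}"
      unfolding tswap_def by force
    have ta: "a \<in> ?t K \<longleftrightarrow> b \<in> K" unfolding tswap_def using ab by force
    have tb: "b \<in> ?t K \<longleftrightarrow> a \<in> K" unfolding tswap_def using ab by force
    have ftK: "finite (?t K)" using fK by simp
    show ?thesis
    proof -
      let ?P = "\<Prod>v\<in>K - {a, b}. x v"
      have m: "x a * x b * ?P \<le> x' a * x' b * ?P" by (rule mult_right_mono[OF prod P0])
      have s2: "x a * ?P + x b * ?P = x' a * ?P + x' b * ?P" using sum by (metis distrib_right)
      show ?thesis
        unfolding split[OF fK, of x] split[OF fK, of x'] split[OF ftK, of x] split[OF ftK, of x'] tK ta tb eqr[symmetric]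
        using m s2 by (cases "a \<in> K"; cases "b \<in> K") (simp_all add: algebra_simps)
    qed
  qed
  have "2 * (\<Sum>K\<in>F. \<Prod>v\<in>K. x v) = (\<Sum>K\<in>F. (\<Prod>v\<in>K. x v) + (\<Prod>v\<in>?t K. x v))"
    by (simp add: sum.distrib re)
  also have "\<dots> \<le> (\<Sum>K\<in>F. (\<Prod>v\<in>K. x' v) + (\<Prod>v\<in>?t K. x' v))"
    by (rule sum_mono) (rule trm)
  also have "\<dots> = 2 * (\<Sum>K\<in>F. \<Prod>v\<in>K. x' v)"
    by (simp add: sum.distrib re)
  finally show ?thesis by simp
qed

lemma esym_const:
  assumes "finite S" "\<And>v. v \<in> S \<Longrightarrow> x v = c"
  shows "esym S k x = real (card S choose k) * c ^ k"
proof -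
  have "esym S k x = (\<Sum>K\<in>{K. K \<subseteq> S \<and> card K = k}. c ^ k)"
    unfolding esym_def
    by (rule sum.cong) (auto simp: assms(2) subset_iff)
  also have "\<dots> = real (card S choose k) * c ^ k"
    using n_subsets[OF assms(1)] by simp
  finally show ?thesis .
qed

lemma maclaurin:
  fixes x :: "'a \<Rightarrow> real"
  assumes fin: "finite S" and sp: "card S > 0" and nn: "\<And>v. x v \<ge> 0" and s1: "(\<Sum>v\<in>S. x v) = 1"
  shows "esym S k x \<le> real (card S choose k) / real (card S) ^ k"
proof -
  define m where "m = 1 / real (card S)"
  have mpos: "m > 0" using sp by (simp add: m_def)
  have main: "\<And>x. card {v\<in>S. x v \<noteq> m} = N \<Longrightarrow> (\<forall>v. x v \<ge> 0) \<Longrightarrow> (\<Sum>v\<in>S. x v) = 1 \<Longrightarrow>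
      esym S k x \<le> real (card S choose k) * m ^ k" for N
  proof (induction N rule: less_induct)
    case (less N x)
    show ?case
    proof (cases "\<forall>v\<in>S. x v = m")
      case True
      then show ?thesis by (simp add: esym_const[OF fin])
    next
      case False
      then obtain a0 where a0: "a0 \<in> S" "x a0 \<noteq> m" by blast
      have ex_lt: "\<exists>a\<in>S. x a < m"
      proof (rule ccontr)
        assume "\<not> ?thesis"
        hence ge: "\<forall>v\<in>S. x v \<ge> m" by auto
        with a0 have gt: "x a0 > m" by force
        have "(\<Sum>v\<in>S. m) < (\<Sum>v\<in>S. x v)"
          using sum_strict_mono_ex1[OF fin, of "\<lambda>_. m" x] ge a0 gt by blast
        thus False using less.prems(3) sp by (simp add: m_def)
      qed
      have ex_gt: "\<exists>b\<in>S. x b > m"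
      proof (rule ccontr)
        assume "\<not> ?thesis"
        hence le: "\<forall>v\<in>S. x v \<le> m" by auto
        with a0 have lt: "x a0 < m" by force
        have "(\<Sum>v\<in>S. x v) < (\<Sum>v\<in>S. m)"
          using sum_strict_mono_ex1[OF fin, of x "\<lambda>_. m"] le a0 lt by blast
        thus False using less.prems(3) sp by (simp add: m_def)
      qed
      then obtain a b where a: "a \<in> S" "x a < m" and b: "b \<in> S" "x b > m"
        using ex_lt by blast
      have ab: "a \<noteq> b" using a b by auto
      define x' where "x' = x(a := m, b := x a + x b - m)"
      have x'a: "x' a = m" and x'b: "x' b = x a + x b - m" using ab by (auto simp: x'_def)
      have nn': "\<forall>v. x' v \<ge> 0" using less.prems(2) a b mpos by (auto simp: x'_def) (smt (verit) less.prems(2))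
      have prodle: "x a * x b \<le> x' a * x' b"
      proof -
        have "x' a * x' b - x a * x b = (m - x a) * (x b - m)" by (simp add: x'a x'b algebra_simps)
        also have "\<dots> \<ge> 0" using a b by simp
        finally show ?thesis by simp
      qed
      have sum': "(\<Sum>v\<in>S. x' v) = 1"
      proof -
        have "(\<Sum>v\<in>S. x' v) = x' a + x' b + (\<Sum>v\<in>S - {a, b}. x' v)"
          using fin a b ab by (simp add: sum.remove[of S a] sum.remove[of "S - {a}" b] Diff_insert2[symmetric] insert_commute)
        also have "(\<Sum>v\<in>S - {a, b}. x' v) = (\<Sum>v\<in>S - {a, b}. x v)"
          by (rule sum.cong) (auto simp: x'_def)
        also have "x' a + x' b + (\<Sum>v\<in>S - {a, b}. x v) = x a + x b + (\<Sum>v\<in>S - {a, b}. x v)"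
          by (simp add: x'a x'b)
        also have "\<dots> = (\<Sum>v\<in>S. x v)"
          using fin a b ab by (simp add: sum.remove[of S a] sum.remove[of "S - {a}" b] Diff_insert2[symmetric] insert_commute)
        finally show ?thesis using less.prems(3) by simp
      qed
      have sub: "{v\<in>S. x' v \<noteq> m} \<subseteq> {v\<in>S. x v \<noteq> m} - {a}"
        using a b ab by (auto simp: x'_def)
      have "card {v\<in>S. x' v \<noteq> m} < N"
      proof -
        have "card {v\<in>S. x' v \<noteq> m} \<le> card ({v\<in>S. x v \<noteq> m} - {a})"
          by (rule card_mono[OF _ sub]) (simp add: fin)
        also have "\<dots> < card {v\<in>S. x v \<noteq> m}"
          using a fin by (intro card_Diff1_less) auto
        finally show ?thesis using less.prems(1) by simp
      qed
      hence IH: "esym S k x' \<le> real (card S choose k) * m ^ k"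
        using less.IH nn' sum' by blast
      have "esym S k x \<le> esym S k x'"
        unfolding esym_def
        by (rule swap_sum_le[OF _ _ _ ab]) (use a b fin less.prems(2) prodle x'a x'b in \<open>auto simp: x'_def tswap_card tswap_sub intro: finite_subset\<close>)
      thus ?thesis using IH by simp
    qed
  qed
  have "esym S k x \<le> real (card S choose k) * m ^ k"
    using main[OF refl] nn s1 by blast
  thus ?thesis by (simp add: m_def power_one_over divide_simps)
qed


lemma bfix: "real (n choose k) * fact k = (\<Prod>i = 0..<k. real n - real i)"
  by (metis binomial_gbinomial gbinomial_mult_fact' of_nat_id)



definition clq :: "('a \<Rightarrow> 'a \<Rightarrow> bool) \<Rightarrow> 'a set \<Rightarrow> bool" where
  "clq G K \<longleftrightarrow> (\<forall>a\<in>K. \<forall>b\<in>K. a \<noteq> b \<longrightarrow> G a b)"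

definition cliques :: "('a \<Rightarrow> 'a \<Rightarrow> bool) \<Rightarrow> 'a set \<Rightarrow> nat \<Rightarrow> 'a set set" where
  "cliques G V k = {K. K \<subseteq> V \<and> card K = k \<and> clq G K}"

definition lag :: "('a \<Rightarrow> 'a \<Rightarrow> bool) \<Rightarrow> 'a set \<Rightarrow> nat \<Rightarrow> ('a \<Rightarrow> real) \<Rightarrow> real" where
  "lag G V t x = (\<Sum>K\<in>cliques G V t. \<Prod>v\<in>K. x v)"

lemma finite_cliques: "finite V \<Longrightarrow> finite (cliques G V k)"
  unfolding cliques_def by (rule finite_subset[of _ "Pow V"]) auto

lemma prod_split2:
  fixes y :: "'a \<Rightarrow> real"
  assumes "finite L" "a \<noteq> b"
  shows "(\<Prod>v\<in>L. y v) = (if a \<in> L then y a else 1) * (if b \<in> L then y b else 1) * (\<Prod>v\<in>L - {a, b}. y v)"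
proof -
  have "(\<Prod>v\<in>L. y v) = (\<Prod>v\<in>L \<inter> {a,b}. y v) * (\<Prod>v\<in>L - {a, b}. y v)"
    using assms(1) by (rule prod.Int_Diff)
  moreover have "(\<Prod>v\<in>L \<inter> {a,b}. y v) = (if a \<in> L then y a else 1) * (if b \<in> L then y b else 1)"
    using assms(2) by (cases "a \<in> L"; cases "b \<in> L") (auto simp: Int_insert_right)
  ultimately show ?thesis by simp
qed

lemma lag_le_esym:
  assumes fin: "finite V" and SV: "S \<subseteq> V" and nn: "\<And>v. x v \<ge> 0" and z: "\<And>v. v \<notin> S \<Longrightarrow> x v = 0"
  shows "lag G V t x \<le> esym S t x"
proof -
  have fS: "finite S" using fin SV finite_subset by blast
  have "lag G V t x = (\<Sum>K\<in>cliques G V t \<inter> {K. K \<subseteq> S}. \<Prod>v\<in>K. x v)"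
    unfolding lag_def
  proof (rule sum.mono_neutral_right)
    show "finite (cliques G V t)" by (rule finite_cliques[OF fin])
    show "cliques G V t \<inter> {K. K \<subseteq> S} \<subseteq> cliques G V t" by blast
    show "\<forall>K\<in>cliques G V t - cliques G V t \<inter> {K. K \<subseteq> S}. (\<Prod>v\<in>K. x v) = 0"
    proof
      fix K assume K: "K \<in> cliques G V t - cliques G V t \<inter> {K. K \<subseteq> S}"
      then obtain v where "v \<in> K" "v \<notin> S" by auto
      moreover have "finite K" using K fin by (auto simp: cliques_def intro: finite_subset)
      ultimately show "(\<Prod>v\<in>K. x v) = 0" using z by (metis prod_zero_iff)
    qed
  qed
  also have "\<dots> \<le> esym S t x"
    unfolding esym_def
    by (rule sum_mono2) (auto simp: cliques_def fS nn prod_nonneg)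
  finally show ?thesis .
qed

lemma choose_ratio_mono:
  assumes "1 \<le> s" "s \<le> r"
  shows "real (s choose t) / real s ^ t \<le> real (r choose t) / real r ^ t"
proof (cases "t \<le> s")
  case False
  hence "s choose t = 0" by simp
  hence e0: "real (s choose t) / real s ^ t = 0" by simp
  have "0 \<le> real (r choose t) / real r ^ t" by simp
  thus ?thesis using e0 by linarith
next
  case True
  have eq: "real (n choose t) / real n ^ t = (\<Prod>i = 0..<t. 1 - real i / real n) / fact t" if "n \<ge> 1" for n
  proof -
    have "real (n choose t) = (\<Prod>i = 0..<t. real n - real i) / fact t"
      using bfix[of n t] by (simp add: field_simps)
    also have "(\<Prod>i = 0..<t. real n - real i) = real n ^ t * (\<Prod>i = 0..<t. 1 - real i / real n)"
    proof -
      have np: "real n > 0" using that by simp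
      have "(\<Prod>i = 0..<t. 1 - real i / real n) = (\<Prod>i = 0..<t. (real n - real i) / real n)"
        by (rule prod.cong) (use np in \<open>simp_all add: field_simps\<close>)
      also have "\<dots> = (\<Prod>i = 0..<t. real n - real i) / real n ^ t"
        by (simp add: prod_dividef)
      finally show ?thesis using np by simp
    qed
    finally show ?thesis using that by (simp add: field_simps)
  qed
  have "(\<Prod>i = 0..<t. 1 - real i / real s) \<le> (\<Prod>i = 0..<t. 1 - real i / real r)"
  proof (rule prod_mono, safe)
    fix i assume "i \<in> {0..<t}"
    hence "i < s" using True by simp
    show "0 \<le> 1 - real i / real s" using \<open>i < s\<close> assms by (simp add: field_simps)
    show "1 - real i / real s \<le> 1 - real i / real r"
      using assms by (simp add: frac_le)
  qed
  thus ?thesis using eq[of s] eq[of r] assms by (simp add: divide_right_mono)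
qed

lemma clique_card_le:
  assumes fin: "finite V" and nok: "cliques G V (Suc r) = {}" and SV: "S \<subseteq> V" and cS: "clq G S"
  shows "card S \<le> r"
proof (rule ccontr)
  assume "\<not> card S \<le> r"
  then obtain K where "K \<subseteq> S" "card K = Suc r"
    by (metis not_less_eq_eq obtain_subset_with_card_n)
  hence "K \<in> cliques G V (Suc r)" using SV cS by (auto simp: cliques_def clq_def)
  thus False using nok by simp
qed

lemma lagrangian:
  assumes fin: "finite V" and nok: "cliques G V (Suc r) = {}" and r1: "r \<ge> 1"
  shows "S \<subseteq> V \<Longrightarrow> (\<forall>v. x v \<ge> 0) \<Longrightarrow> (\<forall>v. v \<notin> S \<longrightarrow> x v = 0) \<Longrightarrow> (\<Sum>v\<in>S. x v) = 1 \<Longrightarrow>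
     lag G V t x \<le> real (r choose t) / real r ^ t"
proof (induction "card S" arbitrary: S x rule: less_induct)
  case less
  have fS: "finite S" using fin less.prems(1) finite_subset by blast
  show ?case
  proof (cases "clq G S")
    case True
    have cS: "card S \<le> r" using clique_card_le[OF fin nok less.prems(1) True] .
    have cpos: "card S > 0"
    proof (rule ccontr)
      assume "\<not> card S > 0"
      hence "S = {}" using fS by simp
      thus False using less.prems(4) by simp
    qed
    have "lag G V t x \<le> esym S t x"
      by (rule lag_le_esym[OF fin less.prems(1)]) (use less.prems in auto)
    also have "\<dots> \<le> real (card S choose t) / real (card S) ^ t"
      by (rule maclaurin[OF fS cpos]) (use less.prems in auto)
    also have "\<dots> \<le> real (r choose t) / real r ^ t"
      by (rule choose_ratio_mono) (use cS cpos in auto)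
    finally show ?thesis .
  next
    case False
    then obtain u v where uv: "u \<in> S" "v \<in> S" "u \<noteq> v" "\<not> G u v"
      unfolding clq_def by blast
    have noboth: "\<not> (u \<in> K \<and> v \<in> K)" if "K \<in> cliques G V t" for K
      using that uv by (auto simp: cliques_def clq_def)
    define s where "s = x u + x v"
    define x1 where "x1 = x(u := s, v := 0)"
    define x2 where "x2 = x(u := 0, v := s)"
    have B1: "lag G V t x1 \<le> real (r choose t) / real r ^ t"
    proof (rule less.hyps[of "S - {v}"])
      show "card (S - {v}) < card S" by (metis card_Diff1_less fS uv(2))
      show "S - {v} \<subseteq> V" using less.prems(1) by blast
      show "\<forall>w. 0 \<le> x1 w" using less.prems(2) by (simp add: x1_def s_def)
      show "\<forall>w. w \<notin> S - {v} \<longrightarrow> x1 w = 0" using less.prems(3) uv by (simp add: x1_def)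
      have "(\<Sum>w\<in>S - {v}. x1 w) = x1 u + (\<Sum>w\<in>S - {v} - {u}. x1 w)"
        using fS uv by (simp add: sum.remove[of "S - {v}" u])
      also have "(\<Sum>w\<in>S - {v} - {u}. x1 w) = (\<Sum>w\<in>S - {v} - {u}. x w)"
        by (rule sum.cong) (auto simp: x1_def)
      also have "x1 u = x u + x v" using uv by (simp add: x1_def s_def)
      also have "x u + x v + (\<Sum>w\<in>S - {v} - {u}. x w) = (\<Sum>w\<in>S. x w)"
        using fS uv by (simp add: sum.remove[of S v] sum.remove[of "S - {v}" u])
      finally show "(\<Sum>w\<in>S - {v}. x1 w) = 1" using less.prems(4) by simp
    qed
    have B2: "lag G V t x2 \<le> real (r choose t) / real r ^ t"
    proof (rule less.hyps[of "S - {u}"])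
      show "card (S - {u}) < card S" by (metis card_Diff1_less fS uv(1))
      show "S - {u} \<subseteq> V" using less.prems(1) by blast
      show "\<forall>w. 0 \<le> x2 w" using less.prems(2) by (simp add: x2_def s_def)
      show "\<forall>w. w \<notin> S - {u} \<longrightarrow> x2 w = 0" using less.prems(3) uv by (simp add: x2_def)
      have "(\<Sum>w\<in>S - {u}. x2 w) = x2 v + (\<Sum>w\<in>S - {u} - {v}. x2 w)"
        using fS uv by (simp add: sum.remove[of "S - {u}" v])
      also have "(\<Sum>w\<in>S - {u} - {v}. x2 w) = (\<Sum>w\<in>S - {u} - {v}. x w)"
        by (rule sum.cong) (auto simp: x2_def)
      also have "x2 v = x u + x v" using uv by (simp add: x2_def s_def)
      also have "x u + x v + (\<Sum>w\<in>S - {u} - {v}. x w) = (\<Sum>w\<in>S. x w)"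
        using fS uv by (simp add: sum.remove[of S u] sum.remove[of "S - {u}" v])
      finally show "(\<Sum>w\<in>S - {u}. x2 w) = 1" using less.prems(4) by simp
    qed
    show ?thesis
    proof (cases "s = 0")
      case True
      hence "x u = 0" "x v = 0" using less.prems(2) by (auto simp: s_def) (smt (verit) less.prems(2))+
      hence "x1 = x" using True by (auto simp: x1_def)
      thus ?thesis using B1 by simp
    next
      case False
      have spos: "s > 0" using False less.prems(2) by (smt (verit) s_def)
      define \<alpha> where "\<alpha> = x u / s"
      define \<beta> where "\<beta> = x v / s"
      have ab: "\<alpha> \<ge> 0" "\<beta> \<ge> 0" "\<alpha> + \<beta> = 1"
      proof -
        show "\<alpha> \<ge> 0" "\<beta> \<ge> 0" using less.prems(2) spos by (auto simp: \<alpha>_def \<beta>_def)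
        have "\<alpha> + \<beta> = (x u + x v) / s" by (simp add: \<alpha>_def \<beta>_def add_divide_distrib)
        thus "\<alpha> + \<beta> = 1" using spos by (simp add: s_def)
      qed
      have per: "(\<Prod>w\<in>K. x w) = \<alpha> * (\<Prod>w\<in>K. x1 w) + \<beta> * (\<Prod>w\<in>K. x2 w)"
        if K: "K \<in> cliques G V t" for K
      proof -
        have fK: "finite K" using K fin by (auto simp: cliques_def intro: finite_subset)
        have e1: "(\<Prod>w\<in>K - {u, v}. x1 w) = (\<Prod>w\<in>K - {u, v}. x w)"
          by (rule prod.cong) (auto simp: x1_def)
        have e2: "(\<Prod>w\<in>K - {u, v}. x2 w) = (\<Prod>w\<in>K - {u, v}. x w)"
          by (rule prod.cong) (auto simp: x2_def)
        have x1u: "x1 u = s" "x1 v = 0" "x2 u = 0" "x2 v = s" using uv by (auto simp: x1_def x2_def)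
        show ?thesis
        proof -
          have as: "\<alpha> * s = x u" "\<beta> * s = x v" using spos by (auto simp: \<alpha>_def \<beta>_def)
          have one: "\<alpha> * P + \<beta> * P = P" for P using ab(3) by (metis distrib_right mult_1)
          show ?thesis
            unfolding prod_split2[OF fK uv(3), of x] prod_split2[OF fK uv(3), of x1] prod_split2[OF fK uv(3), of x2] e1 e2 x1u
            using noboth[OF K] by (cases "u \<in> K"; cases "v \<in> K") (simp_all add: one mult.assoc[symmetric] as)
        qed
      qed
      have "lag G V t x = \<alpha> * lag G V t x1 + \<beta> * lag G V t x2"
        unfolding lag_def by (simp add: per sum.distrib sum_distrib_left)
      also have "\<dots> \<le> \<alpha> * (real (r choose t) / real r ^ t) + \<beta> * (real (r choose t) / real r ^ t)"
        using B1 B2 ab by (intro add_mono mult_left_mono) auto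
      also have "\<dots> = (\<alpha> + \<beta>) * (real (r choose t) / real r ^ t)" by (simp only: distrib_right)
      also have "\<dots> = real (r choose t) / real r ^ t" using ab by simp
      finally show ?thesis .
    qed
  qed
qed

lemma zykov_count:
  assumes fin: "finite V" and nok: "cliques G V (Suc r) = {}" and r1: "r \<ge> 1"
  shows "real (card (cliques G V t)) \<le> real (r choose t) / real r ^ t * real (card V) ^ t"
proof (cases "card V = 0")
  case True
  hence "V = {}" using fin by simp
  have sub: "cliques G V t \<subseteq> {{}}" using \<open>V = {}\<close> by (auto simp: cliques_def)
  hence c: "card (cliques G V t) \<le> 1" using card_mono[OF _ sub] by simp
  show ?thesis
  proof (cases t)
    case 0 thus ?thesis using c by simp
  next
    case (Suc k)
    hence "cliques G V t = {}" using \<open>V = {}\<close> by (auto simp: cliques_def)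
    thus ?thesis by simp
  qed
next
  case False
  define n where "n = real (card V)"
  have np: "n > 0" using False by (simp add: n_def)
  define x where "x = (\<lambda>v. if v \<in> V then 1 / n else 0)"
  have "lag G V t x \<le> real (r choose t) / real r ^ t"
    by (rule lagrangian[OF fin nok r1 subset_refl]) (use np in \<open>auto simp: x_def n_def\<close>)
  moreover have "lag G V t x = real (card (cliques G V t)) * (1 / n) ^ t"
  proof -
    have "lag G V t x = (\<Sum>K\<in>cliques G V t. (1/n) ^ t)"
      unfolding lag_def
    proof (rule sum.cong[OF refl])
      fix K assume "K \<in> cliques G V t"
      hence "K \<subseteq> V" "card K = t" by (auto simp: cliques_def)
      thus "(\<Prod>v\<in>K. x v) = (1/n) ^ t" by (simp add: x_def subset_iff)
    qed
    thus ?thesis by simp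
  qed
  ultimately show ?thesis using np by (simp add: n_def field_simps power_one_over)
qed




lemma card_filter_sum: "finite B \<Longrightarrow> card {b\<in>B. P b} = (\<Sum>b\<in>B. if P b then 1 else 0)"
  using sum.inter_filter[of B "\<lambda>_. 1::nat" P] by simp

lemma double_count:
  assumes "finite A" "finite B"
  shows "(\<Sum>a\<in>A. card {b\<in>B. R a b}) = (\<Sum>b\<in>B. card {a\<in>A. R a b})"
proof -
  have "(\<Sum>a\<in>A. card {b\<in>B. R a b}) = (\<Sum>a\<in>A. \<Sum>b\<in>B. if R a b then 1 else 0)"
    using assms by (simp add: card_filter_sum)
  also have "\<dots> = (\<Sum>b\<in>B. \<Sum>a\<in>A. if R a b then 1 else 0)" by (rule sum.swap)
  also have "\<dots> = (\<Sum>b\<in>B. card {a\<in>A. R a b})"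
    using assms by (simp add: card_filter_sum)
  finally show ?thesis .
qed

definition csets :: "'a set \<Rightarrow> nat \<Rightarrow> 'a set set" where
  "csets V k = {K. K \<subseteq> V \<and> card K = k}"

lemma finite_csets: "finite V \<Longrightarrow> finite (csets V k)"
  unfolding csets_def by (rule finite_subset[of _ "Pow V"]) auto

lemma card_csets: "finite V \<Longrightarrow> card (csets V k) = card V choose k"
  unfolding csets_def by (rule n_subsets)

definition nbr :: "'a set \<Rightarrow> 'a set set \<Rightarrow> 'a set \<Rightarrow> 'a set" where
  "nbr V H S = {w\<in>V. w \<notin> S \<and> insert w S \<in> H}"

lemma degree_sum:
  assumes fin: "finite V" and H: "H \<subseteq> csets V (Suc c)"
  shows "(\<Sum>S\<in>csets V c. card (nbr V H S)) = Suc c * card H"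
proof -
  have fH: "finite H" using H finite_csets[OF fin] finite_subset by blast
  have "(\<Sum>S\<in>csets V c. card (nbr V H S)) = (\<Sum>w\<in>V. card {S\<in>csets V c. w \<notin> S \<and> insert w S \<in> H})"
    unfolding nbr_def by (rule double_count[OF finite_csets[OF fin] fin])
  also have "\<dots> = (\<Sum>w\<in>V. card {K\<in>H. w \<in> K})"
  proof (rule sum.cong[OF refl])
    fix w assume w: "w \<in> V"
    have "bij_betw (\<lambda>K. K - {w}) {K\<in>H. w \<in> K} {S\<in>csets V c. w \<notin> S \<and> insert w S \<in> H}"
    proof (rule bij_betw_byWitness[where f' = "insert w"])
      show "\<forall>K\<in>{K \<in> H. w \<in> K}. insert w (K - {w}) = K" by auto
      show "\<forall>S\<in>{S \<in> csets V c. w \<notin> S \<and> insert w S \<in> H}. insert w S - {w} = S" by auto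
      show "(\<lambda>K. K - {w}) ` {K \<in> H. w \<in> K} \<subseteq> {S \<in> csets V c. w \<notin> S \<and> insert w S \<in> H}"
      proof
        fix S assume "S \<in> (\<lambda>K. K - {w}) ` {K \<in> H. w \<in> K}"
        then obtain K where K: "K \<in> H" "w \<in> K" "S = K - {w}" by auto
        have "K \<subseteq> V" "card K = Suc c" using K H by (auto simp: csets_def)
        moreover have "finite K" using \<open>K \<subseteq> V\<close> fin finite_subset by blast
        ultimately show "S \<in> {S \<in> csets V c. w \<notin> S \<and> insert w S \<in> H}"
          using K by (auto simp: csets_def insert_absorb)
      qed
      show "insert w ` {S \<in> csets V c. w \<notin> S \<and> insert w S \<in> H} \<subseteq> {K \<in> H. w \<in> K}" by auto
    qed
    thus "card {S\<in>csets V c. w \<notin> S \<and> insert w S \<in> H} = card {K\<in>H. w \<in> K}"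
      by (simp add: bij_betw_same_card)
  qed
  also have "\<dots> = (\<Sum>K\<in>H. card {w\<in>V. w \<in> K})"
    by (rule double_count[OF fin fH])
  also have "\<dots> = (\<Sum>K\<in>H. Suc c)"
  proof (rule sum.cong[OF refl])
    fix K assume "K \<in> H"
    hence "K \<subseteq> V" "card K = Suc c" using H by (auto simp: csets_def)
    hence "{w\<in>V. w \<in> K} = K" by auto
    thus "card {w\<in>V. w \<in> K} = Suc c" using \<open>card K = Suc c\<close> by simp
  qed
  finally show ?thesis by simp
qed

definition linkW :: "'a set \<Rightarrow> 'a set set \<Rightarrow> nat \<Rightarrow> 'a set \<Rightarrow> 'a set set" where
  "linkW V H c W = {S\<in>csets V c. W \<subseteq> nbr V H S}"

lemma link_sum:
  assumes fin: "finite V"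
  shows "(\<Sum>W\<in>csets V m. card (linkW V H c W)) = (\<Sum>S\<in>csets V c. card (nbr V H S) choose m)"
proof -
  have "(\<Sum>W\<in>csets V m. card (linkW V H c W)) = (\<Sum>S\<in>csets V c. card {W\<in>csets V m. W \<subseteq> nbr V H S})"
    unfolding linkW_def by (rule double_count[OF finite_csets[OF fin] finite_csets[OF fin]])
  also have "\<dots> = (\<Sum>S\<in>csets V c. card (nbr V H S) choose m)"
  proof (rule sum.cong[OF refl])
    fix S
    have "{W\<in>csets V m. W \<subseteq> nbr V H S} = {W. W \<subseteq> nbr V H S \<and> card W = m}"
      by (auto simp: csets_def nbr_def)
    moreover have "finite (nbr V H S)" using fin by (simp add: nbr_def)
    ultimately show "card {W\<in>csets V m. W \<subseteq> nbr V H S} = card (nbr V H S) choose m"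
      by (simp add: n_subsets)
  qed
  finally show ?thesis .
qed

lemma absorb_eq: "Suc k * (n choose Suc k) = (n - k) * (n choose k)"
  by (metis binomial_absorption binomial_absorb_comp)

lemma good_count:
  assumes fin: "finite V" and H: "H \<subseteq> csets V (Suc c)" and dens: "real (card H) \<ge> \<delta> * real (card V choose Suc c)"
    and dpos: "\<delta> > 0" and n2c: "card V \<ge> 2 * c" and npos: "card V > 0"
  shows "real (card {S\<in>csets V c. real (card (nbr V H S)) \<ge> \<delta> * (real (card V) - real c) / 2})
           \<ge> \<delta> / 4 * real (card V choose c)"
proof -
  define n where "n = card V"
  define N where "N = csets V c"
  define G where "G = {S\<in>N. real (card (nbr V H S)) \<ge> \<delta> * (real n - real c) / 2}"
  have fN: "finite N" using finite_csets[OF fin] by (simp add: N_def)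
  have fG: "finite G" using fN by (simp add: G_def)
  have cN: "card N = n choose c" by (simp add: N_def n_def card_csets[OF fin])
  have dle: "card (nbr V H S) \<le> n" for S
    unfolding n_def nbr_def by (rule card_mono[OF fin]) auto
  have "real (Suc c * card H) = real (\<Sum>S\<in>N. card (nbr V H S))"
    using degree_sum[OF fin H] by (simp add: N_def)
  also have "\<dots> = (\<Sum>S\<in>G. real (card (nbr V H S))) + (\<Sum>S\<in>N - G. real (card (nbr V H S)))"
  proof -
    have GN: "G \<subseteq> N" by (auto simp: G_def)
    show ?thesis using sum.subset_diff[OF GN fN, of "\<lambda>S. real (card (nbr V H S))"] by (simp add: add.commute)
  qed
  also have "\<dots> \<le> (\<Sum>S\<in>G. real n) + (\<Sum>S\<in>N - G. \<delta> * (real n - real c) / 2)"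
    by (intro add_mono sum_mono) (auto simp: dle G_def)
  also have "\<dots> \<le> real (card G) * real n + real (card N) * (\<delta> * (real n - real c) / 2)"
  proof -
    have "real (card (N - G)) \<le> real (card N)" using fN by (simp add: card_mono)
    moreover have "\<delta> * (real n - real c) / 2 \<ge> 0" using n2c dpos by (simp add: n_def)
    ultimately show ?thesis by (simp add: mult_right_mono)
  qed
  finally have A: "real (Suc c * card H) \<le> real (card G) * real n + real (card N) * (\<delta> * (real n - real c) / 2)" .
  have "real (Suc c) * (\<delta> * real (n choose Suc c)) \<le> real (Suc c) * real (card H)"
    by (rule mult_left_mono) (use dens in \<open>simp_all add: n_def\<close>)
  hence "real (Suc c * card H) \<ge> real (Suc c) * (\<delta> * real (n choose Suc c))"
    by (simp only: of_nat_mult)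
  also have "real (Suc c) * (\<delta> * real (n choose Suc c)) = \<delta> * real (Suc c * (n choose Suc c))"
    by (simp only: of_nat_mult mult.left_commute)
  also have "Suc c * (n choose Suc c) = (n - c) * (n choose c)" by (rule absorb_eq)
  finally have B: "real (Suc c * card H) \<ge> \<delta> * ((real n - real c) * real (n choose c))"
    using n2c by (simp add: n_def of_nat_diff)
  have e: "real (card N) * (\<delta> * (real n - real c) / 2) = \<delta> * ((real n - real c) * real (n choose c)) / 2"
    by (simp add: cN)
  have C1: "real (card G) * real n \<ge> \<delta> * ((real n - real c) * real (n choose c)) / 2"
    using A B e by linarith
  have R2: "real n - real c \<ge> real n / 2" using n2c by (simp add: n_def)
  have C2: "\<delta> * ((real n - real c) * real (n choose c)) / 2 \<ge> \<delta> * (real n / 2 * real (n choose c)) / 2"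
    using R2 dpos by (intro divide_right_mono mult_left_mono mult_right_mono) auto
  have e2: "\<delta> * (real n / 2 * real (n choose c)) / 2 = (\<delta> / 4 * real (n choose c)) * real n"
    by (simp add: field_simps)
  have "real (card G) * real n \<ge> (\<delta> / 4 * real (n choose c)) * real n"
    using C1 C2 e2 by linarith
  hence "real (card G) \<ge> \<delta> / 4 * real (n choose c)"
    using npos by (simp add: n_def)
  thus ?thesis unfolding G_def N_def n_def .
qed

lemma exists_ge_avg:
  fixes f :: "'b \<Rightarrow> real"
  assumes "finite A" "A \<noteq> {}" "(\<Sum>a\<in>A. f a) \<ge> X"
  shows "\<exists>a\<in>A. f a * real (card A) \<ge> X"
proof (rule ccontr)
  assume "\<not> ?thesis"
  hence lt: "\<forall>a\<in>A. f a * real (card A) < X" by auto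
  have "(\<Sum>a\<in>A. f a * real (card A)) < (\<Sum>a\<in>A. X)"
    by (rule sum_strict_mono[OF assms(1) assms(2)]) (use lt in auto)
  hence "(\<Sum>a\<in>A. f a) * real (card A) < real (card A) * X"
    by (simp add: sum_distrib_right)
  moreover have "real (card A) * X \<le> real (card A) * (\<Sum>a\<in>A. f a)"
    using assms(3) by (simp add: mult_left_mono)
  ultimately show False by (simp add: mult.commute)
qed

lemma choose_lower:
  assumes "m \<le> D"
  shows "real (D choose m) * fact m \<ge> (real D - real m) ^ m"
proof -
  have "(real D - real m) ^ m = (\<Prod>i = 0..<m. real D - real m)" by simp
  also have "\<dots> \<le> (\<Prod>i = 0..<m. real D - real i)"
    by (rule prod_mono) (use assms in auto)
  also have "\<dots> = real (D choose m) * fact m" by (rule bfix[symmetric])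
  finally show ?thesis .
qed

lemma choose_upper: "real (n choose m) * fact m \<le> real n ^ m"
proof -
  have "(n choose m) * fact m \<le> n ^ m" by (rule binomial_fact_pow)
  hence "real ((n choose m) * fact m) \<le> real (n ^ m)" by (simp only: of_nat_le_iff)
  thus ?thesis by (simp only: of_nat_mult of_nat_fact of_nat_power)
qed




lemma link_numeric:
  fixes X g \<delta> :: real
  assumes dpos: "\<delta> > 0" and nbig: "real n \<ge> 2 * real c + 3 * real m / \<delta>" and npos: "n > 0"
    and XB: "X * real (n choose m) \<ge> g * real (D choose m)" and X0: "X \<ge> 0"
    and g: "g \<ge> \<delta> / 4 * real (n choose c)" and Dge: "real D \<ge> \<delta> * (real n - real c) / 2"
  shows "X \<ge> \<delta> / 4 * (\<delta> / 8) ^ m * real (n choose c)"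
proof -
  have dn: "\<delta> * real n \<ge> 2 * \<delta> * real c + 3 * real m"
  proof -
    have "\<delta> * real n \<ge> \<delta> * (2 * real c + 3 * real m / \<delta>)" using nbig dpos by (simp add: mult_left_mono)
    also have "\<delta> * (2 * real c + 3 * real m / \<delta>) = 2 * \<delta> * real c + 3 * real m" using dpos by (simp add: field_simps)
    finally show ?thesis .
  qed
  have Dm: "real D - real m \<ge> \<delta> * real n / 8"
  proof -
    have "\<delta> * real c \<ge> 0" using dpos by simp
    moreover have "\<delta> * (real n - real c) = \<delta> * real n - \<delta> * real c" by (simp add: algebra_simps)
    ultimately show ?thesis using Dge dn by linarith
  qed
  have pos8: "\<delta> * real n / 8 > 0" using dpos npos by simp
  have mD: "m \<le> D" using Dm pos8 by linarith
  have "\<delta> / 4 * real (n choose c) \<ge> 0" using dpos by simp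
  hence g0: "g \<ge> 0" using g by linarith
  have "g * (\<delta> * real n / 8) ^ m \<le> g * (real D - real m) ^ m"
    using Dm pos8 g0 by (intro mult_left_mono power_mono) auto
  also have "\<dots> \<le> g * (real (D choose m) * fact m)"
    using choose_lower[OF mD] g0 by (simp add: mult_left_mono)
  also have "\<dots> = (g * real (D choose m)) * fact m" by simp
  also have "\<dots> \<le> (X * real (n choose m)) * fact m"
    using XB by (simp add: mult_right_mono)
  also have "\<dots> = X * (real (n choose m) * fact m)" by simp
  also have "\<dots> \<le> X * real n ^ m"
    using choose_upper[of n m] X0 by (simp add: mult_left_mono)
  finally have "g * (\<delta> * real n / 8) ^ m \<le> X * real n ^ m" .
  hence "(g * (\<delta> / 8) ^ m) * real n ^ m \<le> X * real n ^ m"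
    by (simp add: power_mult_distrib field_simps)
  hence "g * (\<delta> / 8) ^ m \<le> X" using npos by simp
  moreover have "\<delta> / 4 * real (n choose c) * (\<delta> / 8) ^ m \<le> g * (\<delta> / 8) ^ m"
    using g dpos by (simp add: mult_right_mono)
  ultimately show ?thesis by (simp add: algebra_simps)
qed

definition cpart :: "'a set set \<Rightarrow> nat \<Rightarrow> (nat \<Rightarrow> 'a set) \<Rightarrow> bool" where
  "cpart H c P \<longleftrightarrow> (\<forall>f. (\<forall>i<c. f i \<in> P i) \<longrightarrow> f ` {..<c} \<in> H)"

definition EH :: "nat \<Rightarrow> nat \<Rightarrow> real \<Rightarrow> nat \<Rightarrow> bool" where
  "EH c m \<delta> n0 \<longleftrightarrow> (\<forall>(V::nat set) H. finite V \<and> card V \<ge> n0 \<and> H \<subseteq> csets V c \<and>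
            real (card H) \<ge> \<delta> * real (card V choose c) \<longrightarrow>
          (\<exists>P. (\<forall>i<c. P i \<subseteq> V \<and> card (P i) = m) \<and> (\<forall>i<c. \<forall>j<c. i \<noteq> j \<longrightarrow> P i \<inter> P j = {}) \<and> cpart H c P))"

lemma erdos_hyper:
  fixes c :: nat
  shows "\<forall>\<delta>>0. \<exists>n0. EH c m \<delta> n0"
proof (induction c)
  case 0
  show ?case
  proof (intro allI impI exI[of _ 0])
    fix \<delta> :: real
    assume d: "\<delta> > 0"
    show "EH 0 m \<delta> 0" unfolding EH_def
    proof (intro allI impI, elim conjE)
      fix V :: "nat set" and H
      assume A: "finite V" "H \<subseteq> csets V 0" "\<delta> * real (card V choose 0) \<le> real (card H)"
      hence "card H > 0" using d by simp
      hence "H \<noteq> {}" by auto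
      moreover have "H \<subseteq> {{}}" using A by (auto simp: csets_def card_eq_0_iff finite_subset)
      ultimately have "{} \<in> H" by auto
      thus "\<exists>P. (\<forall>i<0. P i \<subseteq> V \<and> card (P i) = m) \<and> (\<forall>i<0. \<forall>j<0. i \<noteq> j \<longrightarrow> P i \<inter> P j = {}) \<and> cpart H 0 P"
        by (auto simp: cpart_def)
    qed
  qed
next
  case (Suc c)
  show ?case
  proof (intro allI impI)
    fix \<delta> :: real assume dpos: "\<delta> > 0"
    define \<delta>' where "\<delta>' = \<delta> / 4 * (\<delta> / 8) ^ m"
    have d'pos: "\<delta>' > 0" using dpos by (simp add: \<delta>'_def)
    obtain n1 where n1: "EH c m \<delta>' n1"
      using Suc.IH d'pos by blast
    define n0 where "n0 = n1 + m + 2 * c + nat \<lceil>3 * real m / \<delta>\<rceil> + 1"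
    show "\<exists>n0. EH (Suc c) m \<delta> n0" unfolding EH_def
    proof (intro exI[of _ n0] allI impI, elim conjE)
      fix V :: "nat set" and H
      assume fin: "finite V" and nV: "n0 \<le> card V" and H: "H \<subseteq> csets V (Suc c)"
        and dens: "\<delta> * real (card V choose Suc c) \<le> real (card H)"
      define n where "n = card V"
      have npos: "n > 0" and n2c: "n \<ge> 2 * c" and nm: "n \<ge> m + n1" using nV by (auto simp: n_def n0_def)
      have nbig: "real n \<ge> 2 * real c + 3 * real m / \<delta>"
      proof -
        have "real n \<ge> real (2 * c) + real (nat \<lceil>3 * real m / \<delta>\<rceil>)" using nV by (simp add: n_def n0_def)
        moreover have "real (nat \<lceil>3 * real m / \<delta>\<rceil>) \<ge> 3 * real m / \<delta>" by linarith
        ultimately show ?thesis by simp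
      qed
      define G where "G = {S\<in>csets V c. real (card (nbr V H S)) \<ge> \<delta> * (real n - real c) / 2}"
      have Gc: "real (card G) \<ge> \<delta> / 4 * real (n choose c)"
        using good_count[OF fin H dens dpos] n2c npos by (simp add: G_def n_def)
      define D where "D = nat \<lceil>\<delta> * (real n - real c) / 2\<rceil>"
      have Dge: "real D \<ge> \<delta> * (real n - real c) / 2" unfolding D_def by linarith
      have DG: "D \<le> card (nbr V H S)" if "S \<in> G" for S
      proof -
        have "\<delta> * (real n - real c) / 2 \<le> real (card (nbr V H S))" using that by (simp add: G_def)
        thus ?thesis unfolding D_def by (simp add: nat_le_iff ceiling_le_iff)
      qed
      have fcs: "finite (csets V m)" by (rule finite_csets[OF fin])
      have ne: "csets V m \<noteq> {}"
      proof -
        obtain W where "W \<subseteq> V" "card W = m" using nm obtain_subset_with_card_n[of m V] by (auto simp: n_def)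
        thus ?thesis by (auto simp: csets_def)
      qed
      have sumge: "(\<Sum>W\<in>csets V m. real (card (linkW V H c W))) \<ge> real (card G) * real (D choose m)"
      proof -
        have "real (card G) * real (D choose m) = (\<Sum>S\<in>G. real (D choose m))" by simp
        also have "\<dots> \<le> (\<Sum>S\<in>G. real (card (nbr V H S) choose m))"
          by (rule sum_mono) (simp add: binomial_right_mono DG)
        also have "\<dots> \<le> (\<Sum>S\<in>csets V c. real (card (nbr V H S) choose m))"
          by (rule sum_mono2[OF finite_csets[OF fin]]) (auto simp: G_def)
        also have "\<dots> = real (\<Sum>S\<in>csets V c. card (nbr V H S) choose m)" by simp
        also have "\<dots> = real (\<Sum>W\<in>csets V m. card (linkW V H c W))" by (simp only: link_sum[OF fin])
        also have "\<dots> = (\<Sum>W\<in>csets V m. real (card (linkW V H c W)))" by simp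
        finally show ?thesis .
      qed
      obtain W where W: "W \<in> csets V m" and Wge: "real (card (linkW V H c W)) * real (card (csets V m)) \<ge> real (card G) * real (D choose m)"
        using exists_ge_avg[OF fcs ne sumge] by blast
      have Wge': "real (card (linkW V H c W)) * real (n choose m) \<ge> real (card G) * real (D choose m)"
        using Wge by (simp add: card_csets[OF fin] n_def)
      have big: "real (card (linkW V H c W)) \<ge> \<delta>' * real (n choose c)"
        unfolding \<delta>'_def by (rule link_numeric[OF dpos nbig npos Wge' _ Gc Dge]) simp
      have WV: "W \<subseteq> V" "card W = m" using W by (auto simp: csets_def)
      have finVW: "finite (V - W)" using fin by simp
      have cVW: "card (V - W) = n - m" using WV fin by (simp add: card_Diff_subset n_def finite_subset)
      have linkH: "linkW V H c W \<subseteq> csets (V - W) c"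
        by (auto simp: linkW_def csets_def nbr_def)
      have "real (n - m choose c) \<le> real (n choose c)" by (simp add: binomial_right_mono)
      hence dens': "real (card (linkW V H c W)) \<ge> \<delta>' * real (card (V - W) choose c)"
        using big d'pos cVW by (smt (verit) mult_left_mono)
      have n1m: "n1 \<le> n - m" using nm by simp
      obtain P where P: "\<forall>i<c. P i \<subseteq> V - W \<and> card (P i) = m" "\<forall>i<c. \<forall>j<c. i \<noteq> j \<longrightarrow> P i \<inter> P j = {}"
          "cpart (linkW V H c W) c P"
        using n1[unfolded EH_def, rule_format, of "V - W" "linkW V H c W"] finVW cVW n1m linkH dens' by auto
      define P' where "P' = P(c := W)"
      show "\<exists>P. (\<forall>i<Suc c. P i \<subseteq> V \<and> card (P i) = m) \<and> (\<forall>i<Suc c. \<forall>j<Suc c. i \<noteq> j \<longrightarrow> P i \<inter> P j = {}) \<and> cpart H (Suc c) P"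
      proof (intro exI[of _ P'] conjI)
        show "\<forall>i<Suc c. P' i \<subseteq> V \<and> card (P' i) = m" using P(1) WV by (auto simp: P'_def less_Suc_eq)
      next
        show "\<forall>i<Suc c. \<forall>j<Suc c. i \<noteq> j \<longrightarrow> P' i \<inter> P' j = {}"
          using P(1,2) by (auto simp: P'_def less_Suc_eq)
      next
        show "cpart H (Suc c) P'"
          unfolding cpart_def
        proof (intro allI impI)
          fix f assume f: "\<forall>i<Suc c. f i \<in> P' i"
          have "f ` {..<c} \<in> linkW V H c W"
          proof -
            have "\<forall>i<c. f i \<in> P i"
            proof (intro allI impI)
              fix i assume "i < c"
              hence "i < Suc c" "i \<noteq> c" by auto
              thus "f i \<in> P i" using f by (auto simp: P'_def)
            qed
            thus ?thesis using P(3) unfolding cpart_def by blast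
          qed
          moreover have "f c \<in> W" using f by (auto simp: P'_def)
          ultimately have "insert (f c) (f ` {..<c}) \<in> H"
            by (auto simp: linkW_def nbr_def)
          thus "f ` {..<Suc c} \<in> H" by (simp add: lessThan_Suc)
        qed
      qed
    qed
  qed
qed




lemma card_supsets:
  assumes fin: "finite V" and KV: "K \<subseteq> V" and km: "card K \<le> m"
  shows "card {W\<in>csets V m. K \<subseteq> W} = (card V - card K) choose (m - card K)"
proof -
  have fK: "finite K" using fin KV finite_subset by blast
  have "bij_betw (\<lambda>W. W - K) {W\<in>csets V m. K \<subseteq> W} (csets (V - K) (m - card K))"
  proof (rule bij_betw_byWitness[where f' = "\<lambda>U. U \<union> K"])
    show "\<forall>W\<in>{W \<in> csets V m. K \<subseteq> W}. W - K \<union> K = W" by auto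
    show "\<forall>U\<in>csets (V - K) (m - card K). U \<union> K - K = U" by (auto simp: csets_def)
    show "(\<lambda>W. W - K) ` {W \<in> csets V m. K \<subseteq> W} \<subseteq> csets (V - K) (m - card K)"
    proof
      fix U assume "U \<in> (\<lambda>W. W - K) ` {W \<in> csets V m. K \<subseteq> W}"
      then obtain W where W: "W \<subseteq> V" "card W = m" "K \<subseteq> W" "U = W - K" by (auto simp: csets_def)
      have "finite W" using W fin finite_subset by blast
      thus "U \<in> csets (V - K) (m - card K)" using W by (auto simp: csets_def card_Diff_subset fK)
    qed
    show "(\<lambda>U. U \<union> K) ` csets (V - K) (m - card K) \<subseteq> {W \<in> csets V m. K \<subseteq> W}"
    proof
      fix W assume "W \<in> (\<lambda>U. U \<union> K) ` csets (V - K) (m - card K)"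
      then obtain U where U: "U \<subseteq> V - K" "card U = m - card K" "W = U \<union> K" by (auto simp: csets_def)
      have "finite U" using U fin finite_subset by blast
      moreover have "U \<inter> K = {}" using U by blast
      ultimately have "card W = card U + card K" using U fK by (simp add: card_Un_disjoint)
      thus "W \<in> {W \<in> csets V m. K \<subseteq> W}" using U KV km by (auto simp: csets_def)
    qed
  qed
  hence "card {W\<in>csets V m. K \<subseteq> W} = card (csets (V - K) (m - card K))" by (rule bij_betw_same_card)
  also have "\<dots> = (card V - card K) choose (m - card K)"
    using fin KV by (simp add: card_csets card_Diff_subset fK)
  finally show ?thesis .
qed

lemma cliques_sub: "W \<subseteq> V \<Longrightarrow> cliques G W k = {K\<in>cliques G V k. K \<subseteq> W}"
  by (auto simp: cliques_def)

lemma sum_cliques_W: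
  assumes fin: "finite V" and tm: "t \<le> m"
  shows "(\<Sum>W\<in>csets V m. card (cliques G W t)) = card (cliques G V t) * ((card V - t) choose (m - t))"
proof -
  have "(\<Sum>W\<in>csets V m. card (cliques G W t)) = (\<Sum>W\<in>csets V m. card {K\<in>cliques G V t. K \<subseteq> W})"
    by (rule sum.cong[OF refl]) (auto simp: csets_def cliques_sub)
  also have "\<dots> = (\<Sum>K\<in>cliques G V t. card {W\<in>csets V m. K \<subseteq> W})"
    by (rule double_count[OF finite_csets[OF fin] finite_cliques[OF fin]])
  also have "\<dots> = (\<Sum>K\<in>cliques G V t. (card V - t) choose (m - t))"
  proof (rule sum.cong[OF refl])
    fix K assume "K \<in> cliques G V t"
    hence "K \<subseteq> V" "card K = t" by (auto simp: cliques_def)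
    thus "card {W\<in>csets V m. K \<subseteq> W} = (card V - t) choose (m - t)"
      using card_supsets[OF fin, of K m] tm by simp
  qed
  finally show ?thesis by simp
qed

definition pp :: "nat \<Rightarrow> nat \<Rightarrow> real" where
  "pp r t = real (r choose t) * fact t / real r ^ t"

lemma pp_nonneg: "pp r t \<ge> 0" by (simp add: pp_def)

lemma choose_m_exists:
  assumes "e > 0" "r \<ge> 1"
  shows "\<exists>m. m \<ge> t \<and> m \<ge> k \<and> real (r choose t) / real r ^ t * real m ^ t \<le> (pp r t + e) * real (m choose t)"
proof -
  define a where "a = pp r t / (pp r t + e)"
  have pe: "pp r t + e > 0" using assms pp_nonneg[of r t] by linarith
  have a1: "a < 1" using pe assms by (simp add: a_def)
  have lim: "(\<lambda>m. (1 - real t / real m) ^ t) \<longlonglongrightarrow> 1"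
  proof -
    have "(\<lambda>m. real t / real m) \<longlonglongrightarrow> 0" by (rule lim_const_over_n)
    hence "(\<lambda>m. 1 - real t / real m) \<longlonglongrightarrow> 1 - 0" by (intro tendsto_intros)
    hence "(\<lambda>m. (1 - real t / real m) ^ t) \<longlonglongrightarrow> (1 - 0) ^ t" by (intro tendsto_intros)
    thus ?thesis by simp
  qed
  have "eventually (\<lambda>m. (1 - real t / real m) ^ t > a) sequentially"
    using order_tendstoD(1)[OF lim a1] .
  then obtain M where M: "\<And>m. m \<ge> M \<Longrightarrow> (1 - real t / real m) ^ t > a"
    by (auto simp: eventually_sequentially)
  define m where "m = M + t + k + 1"
  have mpos: "real m > 0" by (simp add: m_def)
  have Mm: "(1 - real t / real m) ^ t > a" using M[of m] by (simp add: m_def)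
  have "(1 - real t / real m) ^ t * real m ^ t = (real m - real t) ^ t"
    using mpos by (simp add: power_mult_distrib[symmetric] field_simps)
  also have "\<dots> \<le> real (m choose t) * fact t" by (rule choose_lower) (simp add: m_def)
  finally have A: "(1 - real t / real m) ^ t * real m ^ t \<le> real (m choose t) * fact t" .
  have "pp r t * real m ^ t = a * (pp r t + e) * real m ^ t" using pe by (simp add: a_def)
  also have "\<dots> \<le> (1 - real t / real m) ^ t * (pp r t + e) * real m ^ t"
    using Mm pe by (intro mult_right_mono) auto
  also have "\<dots> \<le> (pp r t + e) * (real (m choose t) * fact t)"
    using A pe by (simp add: mult.commute mult.left_commute mult_left_mono)
  finally have B: "pp r t * real m ^ t \<le> (pp r t + e) * real (m choose t) * fact t" by simp
  have "real (r choose t) / real r ^ t * real m ^ t = pp r t * real m ^ t / fact t"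
    by (simp add: pp_def)
  also have "\<dots> \<le> (pp r t + e) * real (m choose t)"
    using B by (simp add: divide_le_eq)
  finally show ?thesis by (intro exI[of _ m]) (auto simp: m_def)
qed

lemma supersat:
  assumes r1: "r \<ge> 1" and e: "\<epsilon> > 0"
  shows "\<exists>\<delta>>0. \<exists>n1. \<forall>(V::nat set) G. finite V \<and> card V \<ge> n1 \<and>
     real (card (cliques G V t)) \<ge> (pp r t + \<epsilon>) * real (card V choose t) \<longrightarrow>
     real (card (cliques G V (Suc r))) \<ge> \<delta> * real (card V choose Suc r)"
proof -
  obtain m where m: "m \<ge> t" "m \<ge> Suc r"
    "real (r choose t) / real r ^ t * real m ^ t \<le> (pp r t + \<epsilon>/2) * real (m choose t)"
    using choose_m_exists[of "\<epsilon>/2" r t "Suc r"] e r1 by auto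
  define c where "c = Suc r"
  define \<delta> where "\<delta> = (\<epsilon>/2) / real (m choose c)"
  have mc: "m choose c > 0" using m(2) by (simp add: c_def)
  have dpos: "\<delta> > 0" using e mc by (simp add: \<delta>_def)
  show ?thesis
  proof (intro exI[of _ \<delta>] conjI dpos exI[of _ m] allI impI, elim conjE)
    fix V :: "nat set" and G
    assume fin: "finite V" and nm: "m \<le> card V" and dens: "(pp r t + \<epsilon>) * real (card V choose t) \<le> real (card (cliques G V t))"
    define n where "n = card V"
    define b where "b = real (m choose t)"
    define Ws where "Ws = csets V m"
    define B where "B = {W\<in>Ws. cliques G W (Suc r) \<noteq> {}}"
    have fWs: "finite Ws" using finite_csets[OF fin] by (simp add: Ws_def)
    have fB: "finite B" using fWs by (simp add: B_def)
    have BWs: "B \<subseteq> Ws" by (auto simp: B_def)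
    have cWs: "card Ws = n choose m" by (simp add: Ws_def n_def card_csets[OF fin])
    have b0: "b > 0" using m(1) by (simp add: b_def)
    have pe: "pp r t + \<epsilon>/2 \<ge> 0" using pp_nonneg[of r t] e by linarith
    have good: "real (card (cliques G W t)) \<le> (pp r t + \<epsilon>/2) * b" if "W \<in> Ws - B" for W
    proof -
      have W: "W \<subseteq> V" "card W = m" "cliques G W (Suc r) = {}" using that by (auto simp: Ws_def B_def csets_def)
      have fW: "finite W" using W fin finite_subset by blast
      have "real (card (cliques G W t)) \<le> real (r choose t) / real r ^ t * real (card W) ^ t"
        by (rule zykov_count[OF fW W(3) r1])
      thus ?thesis using m(3) W(2) by (simp add: b_def)
    qed
    have bad: "real (card (cliques G W t)) \<le> b" if "W \<in> B" for W
    proof -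
      have W: "W \<subseteq> V" "card W = m" using that by (auto simp: Ws_def B_def csets_def)
      have fW: "finite W" using W fin finite_subset by blast
      have "cliques G W t \<subseteq> csets W t" by (auto simp: cliques_def csets_def)
      hence "card (cliques G W t) \<le> card (csets W t)" by (rule card_mono[OF finite_csets[OF fW]])
      thus ?thesis using W(2) by (simp add: b_def card_csets[OF fW])
    qed
    have "real (card (cliques G V t)) * real ((n - t) choose (m - t)) = real (\<Sum>W\<in>Ws. card (cliques G W t))"
      using sum_cliques_W[OF fin m(1), of G] by (simp add: Ws_def n_def)
    also have "\<dots> = (\<Sum>W\<in>Ws - B. real (card (cliques G W t))) + (\<Sum>W\<in>B. real (card (cliques G W t)))"
      using sum.subset_diff[OF BWs fWs, of "\<lambda>W. real (card (cliques G W t))"] by simp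
    also have "\<dots> \<le> (\<Sum>W\<in>Ws - B. (pp r t + \<epsilon>/2) * b) + (\<Sum>W\<in>B. b)"
      by (intro add_mono sum_mono good bad) auto
    also have "\<dots> = real (card (Ws - B)) * ((pp r t + \<epsilon>/2) * b) + real (card B) * b" by simp
    also have "\<dots> \<le> real (card Ws) * ((pp r t + \<epsilon>/2) * b) + real (card B) * b"
      using pe b0 fWs by (intro add_mono mult_right_mono) (auto simp: card_mono)
    finally have A: "real (card (cliques G V t)) * real ((n - t) choose (m - t)) \<le> real (n choose m) * ((pp r t + \<epsilon>/2) * b) + real (card B) * b"
      by (simp add: cWs)
    have idt: "real (n choose t) * real ((n - t) choose (m - t)) = real (n choose m) * b"
      using choose_mult[OF m(1), of n] nm by (simp add: b_def n_def flip: of_nat_mult)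
    have Bt: "(pp r t + \<epsilon>) * real (n choose t) * real ((n - t) choose (m - t)) \<le> real (card (cliques G V t)) * real ((n - t) choose (m - t))"
      using dens by (simp add: mult_right_mono n_def)
    have "(pp r t + \<epsilon>) * (real (n choose m) * b) \<le> real (n choose m) * ((pp r t + \<epsilon>/2) * b) + real (card B) * b"
      using A Bt idt by (simp add: mult.assoc)
    hence "(\<epsilon>/2 * real (n choose m)) * b \<le> real (card B) * b"
      by (simp add: algebra_simps)
    hence Bge: "\<epsilon>/2 * real (n choose m) \<le> real (card B)" using b0 by simp
    have "B \<subseteq> (\<Union>K\<in>cliques G V c. {W\<in>Ws. K \<subseteq> W})"
    proof
      fix W assume "W \<in> B"
      then obtain K where "K \<in> cliques G W (Suc r)" "W \<in> Ws" by (auto simp: B_def)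
      moreover hence "W \<subseteq> V" by (auto simp: Ws_def csets_def)
      ultimately show "W \<in> (\<Union>K\<in>cliques G V c. {W\<in>Ws. K \<subseteq> W})"
        by (auto simp: c_def cliques_sub)
    qed
    hence "card B \<le> card (\<Union>K\<in>cliques G V c. {W\<in>Ws. K \<subseteq> W})"
      by (rule card_mono[rotated]) (simp add: finite_cliques[OF fin] fWs)
    also have "\<dots> \<le> (\<Sum>K\<in>cliques G V c. card {W\<in>Ws. K \<subseteq> W})"
      by (rule card_UN_le[OF finite_cliques[OF fin]])
    also have "\<dots> = (\<Sum>K\<in>cliques G V c. (n - c) choose (m - c))"
    proof (rule sum.cong[OF refl])
      fix K assume "K \<in> cliques G V c"
      hence "K \<subseteq> V" "card K = c" by (auto simp: cliques_def)
      thus "card {W\<in>Ws. K \<subseteq> W} = (n - c) choose (m - c)"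
        using card_supsets[OF fin, of K m] m(2) by (simp add: Ws_def n_def c_def)
    qed
    also have "\<dots> = card (cliques G V c) * ((n - c) choose (m - c))" by simp
    finally have Ble: "real (card B) \<le> real (card (cliques G V c)) * real ((n - c) choose (m - c))"
      by (simp only: of_nat_le_iff of_nat_mult[symmetric])
    have idc: "real (n choose m) * real (m choose c) = real (n choose c) * real ((n - c) choose (m - c))"
      using choose_mult[of c m n] m(2) nm by (simp add: c_def n_def flip: of_nat_mult)
    have pos2: "real ((n - c) choose (m - c)) > 0" using m(2) nm by (simp add: c_def n_def)
    have "\<epsilon>/2 * real (n choose c) * real ((n - c) choose (m - c)) = \<epsilon>/2 * real (n choose m) * real (m choose c)"
      using idc by (simp add: mult.assoc)
    also have "\<dots> \<le> real (card B) * real (m choose c)"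
      using mult_right_mono[OF Bge, of "real (m choose c)"] by simp
    also have "\<dots> \<le> real (card (cliques G V c)) * real ((n - c) choose (m - c)) * real (m choose c)"
      using Ble by (simp add: mult_right_mono)
    finally have "(\<epsilon>/2 * real (n choose c)) * real ((n - c) choose (m - c)) \<le> (real (card (cliques G V c)) * real (m choose c)) * real ((n - c) choose (m - c))"
      by (simp add: algebra_simps)
    hence "\<epsilon>/2 * real (n choose c) \<le> real (card (cliques G V c)) * real (m choose c)"
      using pos2 by simp
    hence "\<delta> * real (n choose c) \<le> real (card (cliques G V c))"
      using mc by (simp add: \<delta>_def field_simps)
    thus "\<delta> * real (card V choose Suc r) \<le> real (card (cliques G V (Suc r)))"
      by (simp add: n_def c_def)
  qed
qed




lemma erdos_stone_clique:
  assumes r1: "r \<ge> 1" and e: "\<epsilon> > 0"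
  shows "\<exists>n1. \<forall>(V::nat set) G. finite V \<and> card V \<ge> n1 \<and>
     real (card (cliques G V t)) \<ge> (pp r t + \<epsilon>) * real (card V choose t) \<longrightarrow>
     (\<exists>P. (\<forall>i<Suc r. P i \<subseteq> V \<and> card (P i) = m) \<and> (\<forall>i<Suc r. \<forall>j<Suc r. i \<noteq> j \<longrightarrow> P i \<inter> P j = {}) \<and>
          (\<forall>i<Suc r. \<forall>j<Suc r. i \<noteq> j \<longrightarrow> (\<forall>a\<in>P i. \<forall>b\<in>P j. G a b)))"
proof -
  obtain \<delta> n1 where dpos: "\<delta> > 0" and n1: "\<forall>(V::nat set) G. finite V \<and> card V \<ge> n1 \<and>
     real (card (cliques G V t)) \<ge> (pp r t + \<epsilon>) * real (card V choose t) \<longrightarrow>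
     real (card (cliques G V (Suc r))) \<ge> \<delta> * real (card V choose Suc r)"
    using supersat[OF r1 e, of t] by blast
  obtain n0 where n0: "EH (Suc r) m \<delta> n0" using erdos_hyper[of "Suc r" m] dpos by blast
  show ?thesis
  proof (intro exI[of _ "max n0 n1"] allI impI, elim conjE)
    fix V :: "nat set" and G
    assume fin: "finite V" and nV: "max n0 n1 \<le> card V"
      and dens: "(pp r t + \<epsilon>) * real (card V choose t) \<le> real (card (cliques G V t))"
    have cl: "real (card (cliques G V (Suc r))) \<ge> \<delta> * real (card V choose Suc r)"
      using n1 fin nV dens by auto
    have Hs: "cliques G V (Suc r) \<subseteq> csets V (Suc r)" by (auto simp: cliques_def csets_def)
    obtain P where P: "\<forall>i<Suc r. P i \<subseteq> V \<and> card (P i) = m" "\<forall>i<Suc r. \<forall>j<Suc r. i \<noteq> j \<longrightarrow> P i \<inter> P j = {}"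
      "cpart (cliques G V (Suc r)) (Suc r) P"
      using n0[unfolded EH_def, rule_format, of V "cliques G V (Suc r)"] fin nV Hs cl by auto
    show "\<exists>P. (\<forall>i<Suc r. P i \<subseteq> V \<and> card (P i) = m) \<and> (\<forall>i<Suc r. \<forall>j<Suc r. i \<noteq> j \<longrightarrow> P i \<inter> P j = {}) \<and>
          (\<forall>i<Suc r. \<forall>j<Suc r. i \<noteq> j \<longrightarrow> (\<forall>a\<in>P i. \<forall>b\<in>P j. G a b))"
    proof (intro exI[of _ P] conjI)
      show "\<forall>i<Suc r. P i \<subseteq> V \<and> card (P i) = m" using P(1) .
      show "\<forall>i<Suc r. \<forall>j<Suc r. i \<noteq> j \<longrightarrow> P i \<inter> P j = {}" using P(2) .
      show "\<forall>i<Suc r. \<forall>j<Suc r. i \<noteq> j \<longrightarrow> (\<forall>a\<in>P i. \<forall>b\<in>P j. G a b)"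
      proof (intro allI impI ballI)
        fix i j a b assume ij: "i < Suc r" "j < Suc r" "i \<noteq> j" and ab: "a \<in> P i" "b \<in> P j"
        define f where "f = (\<lambda>k. if k = i then a else if k = j then b else (SOME x. x \<in> P k))"
        have ne: "P k \<noteq> {}" if "k < Suc r" for k
        proof -
          have "card (P k) = m" using P(1) that by auto
          moreover have "card (P i) = m" "P i \<noteq> {}" using P(1) ij ab by auto
          moreover have "finite (P i)" using P(1) ij fin finite_subset by blast
          ultimately show ?thesis by auto
        qed
        have f: "\<forall>k<Suc r. f k \<in> P k"
        proof (intro allI impI)
          fix k assume "k < Suc r"
          thus "f k \<in> P k" using ab ne[of k] by (auto simp: f_def some_in_eq)
        qed
        hence "f ` {..<Suc r} \<in> cliques G V (Suc r)" using P(3) by (auto simp: cpart_def)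
        hence c: "clq G (f ` {..<Suc r})" by (simp add: cliques_def)
        have "a \<noteq> b" using P(2) ij ab by blast
        moreover have "a \<in> f ` {..<Suc r}" "b \<in> f ` {..<Suc r}" using ij by (auto simp: f_def image_iff intro!: bexI[of _ i] bexI[of _ j])
        ultimately show "G a b" using c by (auto simp: clq_def)
      qed
    qed
  qed
qed

lemma turan_count:
  assumes l1: "l \<ge> 1"
  shows "real (l choose t) * real (n div l) ^ t \<le> real (card {K. K \<subseteq> {0..<n} \<and> card K = t \<and> inj_on (\<lambda>a. a mod l) K})"
proof -
  define q where "q = n div l"
  define D where "D = Sigma (csets {0..<l} t) (\<lambda>R. PiE R (\<lambda>_. {0..<q}))"
  define \<phi> where "\<phi> = (\<lambda>(R, g). (\<lambda>i. g i * l + i) ` (R::nat set))"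
  define Tg where "Tg = {K. K \<subseteq> {0..<n} \<and> card K = t \<and> inj_on (\<lambda>a. a mod l) K}"
  have modeq: "(g * l + i) mod l = i" if "i < l" for g i :: nat using that by simp
  have inj1: "inj_on (\<lambda>i. g i * l + i) R" if "R \<subseteq> {0..<l}" for R g
  proof (rule inj_onI)
    fix x y assume "x \<in> R" "y \<in> R" "g x * l + x = g y * l + y"
    hence "(g x * l + x) mod l = (g y * l + y) mod l" by simp
    moreover have "x < l" "y < l" using \<open>x \<in> R\<close> \<open>y \<in> R\<close> that by auto
    ultimately show "x = y" by simp
  qed
  have into: "\<phi> ` D \<subseteq> Tg"
  proof
    fix K assume "K \<in> \<phi> ` D"
    then obtain R g where R: "R \<subseteq> {0..<l}" "card R = t" and g: "g \<in> PiE R (\<lambda>_. {0..<q})" and K: "K = (\<lambda>i. g i * l + i) ` R"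
      by (auto simp: D_def \<phi>_def csets_def)
    have "K \<subseteq> {0..<n}"
    proof
      fix a assume "a \<in> K"
      then obtain i where i: "i \<in> R" "a = g i * l + i" using K by auto
      have "g i < q" using g i by auto
      hence "g i + 1 \<le> q" by simp
      hence "(g i + 1) * l \<le> q * l" by (rule mult_right_mono) simp
      also have "q * l \<le> n" by (simp add: q_def)
      finally have "g i * l + l \<le> n" by (simp add: algebra_simps)
      moreover have "i < l" using i R by auto
      ultimately show "a \<in> {0..<n}" using i by simp
    qed
    moreover have "card K = t" using K R inj1[OF R(1)] by (simp add: card_image)
    moreover have "inj_on (\<lambda>a. a mod l) K"
    proof (rule inj_onI)
      fix a b assume "a \<in> K" "b \<in> K" "a mod l = b mod l"
      then obtain i j where "i \<in> R" "j \<in> R" "a = g i * l + i" "b = g j * l + j" using K by auto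
      moreover hence "i < l" "j < l" using R by auto
      ultimately show "a = b" using \<open>a mod l = b mod l\<close> modeq by auto
    qed
    ultimately show "K \<in> Tg" by (simp add: Tg_def)
  qed
  have injphi: "inj_on \<phi> D"
  proof (rule inj_onI)
    fix x y assume x: "x \<in> D" and y: "y \<in> D" and eq: "\<phi> x = \<phi> y"
    obtain R g where xs: "x = (R, g)" "R \<subseteq> {0..<l}" "g \<in> PiE R (\<lambda>_. {0..<q})" using x by (cases x) (auto simp: D_def csets_def)
    obtain R' g' where ys: "y = (R', g')" "R' \<subseteq> {0..<l}" "g' \<in> PiE R' (\<lambda>_. {0..<q})" using y by (cases y) (auto simp: D_def csets_def)
    have eq': "(\<lambda>i. g i * l + i) ` R = (\<lambda>i. g' i * l + i) ` R'" using eq xs ys by (simp add: \<phi>_def)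
    have res: "(\<lambda>a. a mod l) ` ((\<lambda>i. h i * l + i) ` S) = S" if "S \<subseteq> {0..<l}" for h S
    proof -
      have "(\<lambda>a. a mod l) ` ((\<lambda>i. h i * l + i) ` S) = (\<lambda>i. (h i * l + i) mod l) ` S" by (simp add: image_comp comp_def)
      also have "\<dots> = (\<lambda>i. i) ` S" by (rule image_cong[OF refl]) (use that modeq in auto)
      finally show ?thesis by simp
    qed
    have RR: "R = R'" using res[OF xs(2), of g] res[OF ys(2), of g'] eq' by simp
    have "g i = g' i" for i
    proof (cases "i \<in> R")
      case True
      hence "g i * l + i \<in> (\<lambda>i. g' i * l + i) ` R'" using eq' by blast
      then obtain j where j: "j \<in> R'" "g i * l + i = g' j * l + j" by auto
      have il: "i < l" "j < l" using True xs(2) j(1) ys(2) by auto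
      have "i = j" using modeq[OF il(1), of "g i"] modeq[OF il(2), of "g' j"] j(2) by simp
      thus ?thesis using j(2) l1 by simp
    next
      case False
      thus ?thesis using xs(3) ys(3) RR by (auto simp: PiE_def extensional_def)
    qed
    thus "x = y" using xs ys RR by auto
  qed
  have cD: "card D = (l choose t) * q ^ t"
  proof -
    have "card D = (\<Sum>R\<in>csets {0..<l} t. card (PiE R (\<lambda>_. {0..<q})))"
      unfolding D_def by (rule card_SigmaI) (auto simp: finite_csets csets_def intro!: finite_PiE intro: finite_subset)
    also have "\<dots> = (\<Sum>R\<in>csets {0..<l} t. q ^ t)"
    proof (rule sum.cong[OF refl])
      fix R assume "R \<in> csets {0..<l} t"
      hence "R \<subseteq> {0..<l}" "card R = t" by (auto simp: csets_def)
      moreover hence "finite R" using finite_subset by blast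
      ultimately show "card (PiE R (\<lambda>_. {0..<q})) = q ^ t" by (simp add: card_PiE)
    qed
    also have "\<dots> = (l choose t) * q ^ t" by (simp add: card_csets)
    finally show ?thesis .
  qed
  have fT: "finite Tg" unfolding Tg_def by (rule finite_subset[of _ "Pow {0..<n}"]) auto
  have "card D \<le> card Tg"
    using card_inj_on_le[OF injphi into fT] .
  hence "(l choose t) * q ^ t \<le> card Tg" using cD by simp
  hence "real ((l choose t) * q ^ t) \<le> real (card Tg)" by (simp only: of_nat_le_iff)
  hence "real (l choose t) * real q ^ t \<le> real (card Tg)" by (simp only: of_nat_mult of_nat_power)
  thus ?thesis by (simp add: q_def Tg_def)
qed

lemma turan_lower_asym:
  assumes l1: "l \<ge> 1" and e: "\<epsilon> > 0"
  shows "\<exists>N0. \<forall>n\<ge>N0. real (l choose t) * real (n div l) ^ t / real (n choose t) \<ge> pp l t - \<epsilon>"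
proof -
  have lim: "(\<lambda>n. pp l t * (1 - real l / real n) ^ t) \<longlonglongrightarrow> pp l t * (1 - 0) ^ t"
    by (intro tendsto_intros lim_const_over_n)
  have "pp l t - \<epsilon> < pp l t * (1 - 0) ^ t" using e by simp
  from order_tendstoD(1)[OF lim this] obtain N where N: "\<And>n. n \<ge> N \<Longrightarrow> pp l t * (1 - real l / real n) ^ t > pp l t - \<epsilon>"
    by (auto simp: eventually_sequentially)
  show ?thesis
  proof (intro exI[of _ "N + l + t + 1"] allI impI)
    fix n assume n: "N + l + t + 1 \<le> n"
    have npos: "real n > 0" using n by simp
    have ct: "real (n choose t) > 0" using n by simp
    have q: "real (n div l) \<ge> (real n - real l) / real l"
    proof -
      have e1: "n div l * l + n mod l = n" by simp
      have e2: "n mod l < l" using l1 by simp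
      have e3: "(n div l + 1) * l = n div l * l + l" by (simp add: distrib_right)
      have "n < (n div l + 1) * l" using e1 e2 e3 by linarith
      hence "real n < (real (n div l) + 1) * real l" by (metis of_nat_1 of_nat_add of_nat_less_iff of_nat_mult)
      thus ?thesis using l1 by (simp add: field_simps)
    qed
    have q0: "(real n - real l) / real l \<ge> 0" using n l1 by simp
    have A: "real (n div l) ^ t \<ge> ((real n - real l) / real l) ^ t" by (rule power_mono[OF q q0])
    have B: "1 / real (n choose t) \<ge> fact t / real n ^ t"
    proof -
      have "real (n choose t) * fact t \<le> real n ^ t" by (rule choose_upper)
      thus ?thesis using ct npos by (simp add: field_simps)
    qed
    have "pp l t - \<epsilon> < pp l t * (1 - real l / real n) ^ t" using N[of n] n by simp
    also have "pp l t * (1 - real l / real n) ^ t = real (l choose t) * ((real n - real l) / real l) ^ t * (fact t / real n ^ t)"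
      using npos l1 by (simp add: pp_def power_divide field_simps)
    also have "\<dots> \<le> real (l choose t) * real (n div l) ^ t * (1 / real (n choose t))"
      by (intro mult_mono A B mult_left_mono) (use q0 in auto)
    finally show "real (l choose t) * real (n div l) ^ t / real (n choose t) \<ge> pp l t - \<epsilon>" by simp
  qed
qed




lemma sat_cong: "(\<forall>i\<in>fv \<phi>. \<rho> i = \<rho>' i) \<longrightarrow> sat M \<rho> \<phi> = sat M \<rho>' \<phi>"
proof (induction \<phi>)
  case (Atom P xs)
  show ?case
  proof
    assume "\<forall>i\<in>fv (Atom P xs). \<rho> i = \<rho>' i"
    hence "\<forall>x\<in>set xs. \<rho> x = \<rho>' x" by simp
    hence e: "map \<rho> xs = map \<rho>' xs" by (simp add: map_eq_conv)
    show "sat M \<rho> (Atom P xs) = sat M \<rho>' (Atom P xs)" unfolding sat.simps e ..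
  qed
qed auto

definition img :: "('v \<Rightarrow> 'w) \<Rightarrow> ('p, 'v) struc \<Rightarrow> ('p, 'w) struc" where
  "img h M = (h ` fst M, \<lambda>P. map h ` snd M P)"

lemma sat_img:
  assumes inj: "inj_on h U"
  shows "(\<forall>i\<in>fv \<phi>. \<rho> i \<in> U) \<Longrightarrow> sat (img h (restrict_struc N U)) (h \<circ> \<rho>) \<phi> = sat N \<rho> \<phi>"
proof (induction \<phi>)
  case (Atom P xs)
  have sU: "set (map \<rho> xs) \<subseteq> U" using Atom by auto
  have "sat (img h (restrict_struc N U)) (h \<circ> \<rho>) (Atom P xs) \<longleftrightarrow>
        (\<exists>ys. ys \<in> snd N P \<and> set ys \<subseteq> U \<and> map h (map \<rho> xs) = map h ys)"
    by (auto simp: img_def restrict_struc_def)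
  also have "\<dots> \<longleftrightarrow> (\<exists>ys. ys \<in> snd N P \<and> set ys \<subseteq> U \<and> map \<rho> xs = ys)"
  proof -
    have "map h (map \<rho> xs) = map h ys \<longleftrightarrow> map \<rho> xs = ys" if "set ys \<subseteq> U" for ys
      using inj_on_map_eq_map[OF inj_on_subset[OF inj, of "set (map \<rho> xs) \<union> set ys"]] sU that by auto
    thus ?thesis by blast
  qed
  also have "\<dots> \<longleftrightarrow> sat N \<rho> (Atom P xs)" using sU by auto
  finally show ?case .
next
  case (Eq i j)
  hence "\<rho> i \<in> U" "\<rho> j \<in> U" by auto
  thus ?case using inj by (auto simp: inj_on_def)
qed auto

definition gr :: "(unit \<Rightarrow> 'p qf) \<Rightarrow> ('p, nat) struc \<Rightarrow> nat \<Rightarrow> nat \<Rightarrow> bool" where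
  "gr I N a b \<longleftrightarrow> [a, b] \<in> snd (interp ar_graph I N) ()"

lemma gr_iff: "gr I N a b \<longleftrightarrow> a \<noteq> b \<and> a \<in> fst N \<and> b \<in> fst N \<and> sat N (\<lambda>i. [a, b] ! i) (I ())"
  by (auto simp: gr_def interp_def ar_graph_def)

lemma hered:
  assumes N: "N \<in> models_n ar T n" and U: "U \<subseteq> {0..<n}" "card U = k" and fvI: "fv (I ()) \<subseteq> {..<2}"
  shows "\<exists>N'\<in>models_n ar T k. \<exists>h. bij_betw h U {0..<k} \<and> (\<forall>a\<in>U. \<forall>b\<in>U. gr I N' (h a) (h b) = gr I N a b)"
proof -
  have fU: "finite U" using U(1) finite_subset by blast
  obtain h where h: "bij_betw h U {0..<k}" using ex_bij_betw_finite_nat[OF fU] U(2) by blast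
  have inj: "inj_on h U" and hU: "h ` U = {0..<k}" using h by (auto simp: bij_betw_def)
  have Nm: "is_model ar T N" "fst N = {0..<n}" using N by (auto simp: models_n_def)
  define N' where "N' = img h (restrict_struc N U)"
  have fst': "fst N' = {0..<k}" by (simp add: N'_def img_def restrict_struc_def hU)
  have hk: "\<forall>x\<in>U. h x < k" using hU by auto
  have struc: "is_struc ar N'"
    using Nm(1) hk unfolding is_struc_def N'_def img_def restrict_struc_def is_model_def by auto
  have sats: "sat N' \<rho>' f" if f: "f \<in> T" and r: "range \<rho>' \<subseteq> fst N'" for f \<rho>'
  proof -
    define \<rho> where "\<rho> = inv_into U h \<circ> \<rho>'"
    have rh: "\<rho>' i \<in> h ` U" for i
    proof -
      have "\<rho>' i \<in> range \<rho>'" by simp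
      hence "\<rho>' i \<in> fst N'" using r by blast
      thus ?thesis using fst' hU by simp
    qed
    have rU: "\<rho> i \<in> U" for i using rh[of i] by (simp add: \<rho>_def inv_into_into)
    have hr: "h \<circ> \<rho> = \<rho>'"
    proof
      fix i have "\<rho>' i \<in> h ` U" by (rule rh)
      thus "(h \<circ> \<rho>) i = \<rho>' i" by (simp add: \<rho>_def f_inv_into_f)
    qed
    have "range \<rho> \<subseteq> fst N" using rU U(1) Nm(2) by auto
    hence "sat N \<rho> f" using Nm(1) f by (auto simp: is_model_def)
    hence "sat (img h (restrict_struc N U)) (h \<circ> \<rho>) f" using sat_img[OF inj] rU by blast
    thus ?thesis using hr by (simp add: N'_def)
  qed
  have Nm': "N' \<in> models_n ar T k" using struc sats fst' by (auto simp: models_n_def is_model_def)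
  have grp: "gr I N' (h a) (h b) = gr I N a b" if ab: "a \<in> U" "b \<in> U" for a b
  proof -
    have "sat N' (\<lambda>i. [h a, h b] ! i) (I ()) = sat N' (h \<circ> (\<lambda>i. [a, b] ! i)) (I ())"
    proof (rule sat_cong[rule_format])
      fix i assume "i \<in> fv (I ())"
      hence "i < 2" using fvI by auto
      thus "[h a, h b] ! i = (h \<circ> (\<lambda>i. [a, b] ! i)) i" by (cases i) auto
    qed
    also have "\<dots> = sat N (\<lambda>i. [a, b] ! i) (I ())"
      unfolding N'_def
    proof (rule sat_img[OF inj], intro ballI)
      fix i assume "i \<in> fv (I ())"
      hence "i < 2" using fvI by auto
      thus "[a, b] ! i \<in> U" using ab by (cases i) auto
    qed
    finally have s: "sat N' (\<lambda>i. [h a, h b] ! i) (I ()) = sat N (\<lambda>i. [a, b] ! i) (I ())" .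
    have "h a = h b \<longleftrightarrow> a = b" using inj ab by (auto simp: inj_on_def)
    moreover have "h a \<in> fst N'" "h b \<in> fst N'" using ab hU fst' by auto
    moreover have "a \<in> fst N" "b \<in> fst N" using ab U(1) Nm(2) by auto
    ultimately show ?thesis using s by (simp add: gr_iff)
  qed
  show ?thesis using Nm' h grp by blast
qed

lemma iso_clique:
  assumes U: "U \<subseteq> fst N" "finite U" "card U = t"
  shows "isomorphic (restrict_struc (interp ar_graph I N) U) (complete_graph t) \<longleftrightarrow> clq (gr I N) U"
proof
  assume "isomorphic (restrict_struc (interp ar_graph I N) U) (complete_graph t)"
  then obtain f where f: "bij_betw f U {0..<t}"
    and pres: "\<And>P xs. set xs \<subseteq> U \<Longrightarrow> (xs \<in> snd (restrict_struc (interp ar_graph I N) U) P \<longleftrightarrow> map f xs \<in> snd (complete_graph t) P)"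
    unfolding isomorphic_def by (auto simp: restrict_struc_def complete_graph_def)
  show "clq (gr I N) U" unfolding clq_def
  proof (intro ballI impI)
    fix a b assume ab: "a \<in> U" "b \<in> U" "a \<noteq> b"
    have "f a \<noteq> f b" using f ab by (auto simp: bij_betw_def inj_on_def)
    moreover have "f a < t" "f b < t" using f ab by (auto simp: bij_betw_def)
    ultimately have "map f [a, b] \<in> snd (complete_graph t) ()" by (auto simp: complete_graph_def)
    hence "[a, b] \<in> snd (restrict_struc (interp ar_graph I N) U) ()" using pres[of "[a, b]" "()"] ab by simp
    thus "gr I N a b" by (simp add: gr_def restrict_struc_def)
  qed
next
  assume c: "clq (gr I N) U"
  obtain f where f: "bij_betw f U {0..<t}" using ex_bij_betw_finite_nat[OF U(2)] U(3) by blast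
  have inj: "inj_on f U" using f by (simp add: bij_betw_def)
  have "\<forall>P xs. set xs \<subseteq> U \<longrightarrow> (xs \<in> snd (restrict_struc (interp ar_graph I N) U) P \<longleftrightarrow> map f xs \<in> snd (complete_graph t) P)"
  proof (intro allI impI)
    fix P :: unit and xs assume xs: "set xs \<subseteq> U"
    have L: "xs \<in> snd (restrict_struc (interp ar_graph I N) U) P \<longleftrightarrow> (\<exists>a b. xs = [a, b] \<and> gr I N a b)"
    proof -
      have "xs \<in> snd (restrict_struc (interp ar_graph I N) U) P \<longleftrightarrow> xs \<in> snd (interp ar_graph I N) ()"
        using xs by (simp add: restrict_struc_def)
      also have "\<dots> \<longleftrightarrow> (\<exists>a b. xs = [a, b] \<and> gr I N a b)"
        by (auto simp: gr_def interp_def ar_graph_def length_Suc_conv numeral_2_eq_2)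
      finally show ?thesis .
    qed
    have R: "map f xs \<in> snd (complete_graph t) P \<longleftrightarrow> (\<exists>a b. xs = [a, b] \<and> a \<noteq> b)"
    proof
      assume "map f xs \<in> snd (complete_graph t) P"
      then obtain x y where "map f xs = [x, y]" "x \<noteq> y" by (auto simp: complete_graph_def)
      then obtain a b where "xs = [a, b]" "f a \<noteq> f b" by (auto simp: map_eq_Cons_conv)
      thus "\<exists>a b. xs = [a, b] \<and> a \<noteq> b" by auto
    next
      assume "\<exists>a b. xs = [a, b] \<and> a \<noteq> b"
      then obtain a b where ab: "xs = [a, b]" "a \<noteq> b" by auto
      hence "a \<in> U" "b \<in> U" using xs by auto
      hence "f a \<noteq> f b" "f a < t" "f b < t" using ab(2) inj f by (auto simp: inj_on_def bij_betw_def)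
      thus "map f xs \<in> snd (complete_graph t) P" using ab by (auto simp: complete_graph_def)
    qed
    have "(\<exists>a b. xs = [a, b] \<and> gr I N a b) \<longleftrightarrow> (\<exists>a b. xs = [a, b] \<and> a \<noteq> b)"
    proof
      assume "\<exists>a b. xs = [a, b] \<and> gr I N a b"
      thus "\<exists>a b. xs = [a, b] \<and> a \<noteq> b" by (auto simp: gr_iff)
    next
      assume "\<exists>a b. xs = [a, b] \<and> a \<noteq> b"
      then obtain a b where ab: "xs = [a, b]" "a \<noteq> b" by auto
      hence "a \<in> U" "b \<in> U" using xs by auto
      hence "gr I N a b" using c ab(2) by (auto simp: clq_def)
      thus "\<exists>a b. xs = [a, b] \<and> gr I N a b" using ab by auto
    qed
    thus "xs \<in> snd (restrict_struc (interp ar_graph I N) U) P \<longleftrightarrow> map f xs \<in> snd (complete_graph t) P"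
      using L R by simp
  qed
  moreover have "bij_betw f (fst (restrict_struc (interp ar_graph I N) U)) (fst (complete_graph t))"
    using f by (simp add: restrict_struc_def complete_graph_def)
  ultimately show "isomorphic (restrict_struc (interp ar_graph I N) U) (complete_graph t)"
    unfolding isomorphic_def by (auto simp: restrict_struc_def)
qed

lemma dens_eq:
  assumes "fst N = {0..<n}"
  shows "ind_density (complete_graph t) (interp ar_graph I N) = real (card (cliques (gr I N) {0..<n} t)) / real (n choose t)"
proof -
  have f1: "fst (interp ar_graph I N) = {0..<n}" using assms by (simp add: interp_def)
  have f2: "card (fst (complete_graph t)) = t" by (simp add: complete_graph_def)
  have "{U. U \<subseteq> {0..<n} \<and> card U = t \<and> isomorphic (restrict_struc (interp ar_graph I N) U) (complete_graph t)}
        = cliques (gr I N) {0..<n} t"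
    unfolding cliques_def
  proof (rule Collect_cong)
    fix U
    show "(U \<subseteq> {0..<n} \<and> card U = t \<and> isomorphic (restrict_struc (interp ar_graph I N) U) (complete_graph t))
          = (U \<subseteq> {0..<n} \<and> card U = t \<and> clq (gr I N) U)"
    proof (cases "U \<subseteq> {0..<n} \<and> card U = t")
      case True
      hence "finite U" using finite_subset by blast
      thus ?thesis using iso_clique[of U N t I] True assms by auto
    next
      case False thus ?thesis by auto
    qed
  qed
  thus ?thesis unfolding ind_density_def f1 f2 by simp
qed

lemma cliques_le: "card (cliques G {0..<n} t) \<le> n choose t"
proof -
  have "cliques G {0..<n} t \<subseteq> csets {0..<n} t" by (auto simp: cliques_def csets_def)
  hence "card (cliques G {0..<n} t) \<le> card (csets {0..<n} t)" by (rule card_mono[OF finite_csets, rotated]) simp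
  thus ?thesis by (simp add: card_csets)
qed

lemma dens_le1:
  fixes N :: "('p, nat) struc"
  assumes "fst N = {0..<n}"
  shows "ind_density (complete_graph t) (interp ar_graph I N) \<le> 1"
proof -
  have "real (card (cliques (gr I N) {0..<n} t)) \<le> real (n choose t)" using cliques_le by simp
  thus ?thesis unfolding dens_eq[OF assms] by (cases "n choose t = 0") (auto simp: divide_le_eq_1)
qed

lemma subgraph_turan:
  assumes "fst N = {0..<n}" and "subgraph (turan_graph n l) (interp ar_graph I N)"
  shows "\<exists>f. inj_on f {0..<n} \<and> f ` {0..<n} \<subseteq> {0..<n} \<and>
     (\<forall>a b. a < n \<longrightarrow> b < n \<longrightarrow> a mod l \<noteq> b mod l \<longrightarrow> gr I N (f a) (f b))"
  using assms unfolding subgraph_def turan_graph_def gr_def by (auto simp: interp_def)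

lemma turan_subgraph_intro:
  assumes "fst N = {0..<n}" "inj_on f {0..<n}" "f ` {0..<n} \<subseteq> {0..<n}"
    "\<forall>a b. a < n \<longrightarrow> b < n \<longrightarrow> a mod l \<noteq> b mod l \<longrightarrow> gr I N (f a) (f b)"
  shows "subgraph (turan_graph n l) (interp ar_graph I N)"
  using assms unfolding subgraph_def turan_graph_def gr_def by (auto simp: interp_def)




lemma clique_lower:
  fixes f :: "nat \<Rightarrow> nat"
  assumes inj: "inj_on f {0..<n}" and im: "f ` {0..<n} \<subseteq> {0..<n}"
    and E: "\<forall>a b. a < n \<longrightarrow> b < n \<longrightarrow> a mod l \<noteq> b mod l \<longrightarrow> G (f a) (f b)"
  shows "card {K. K \<subseteq> {0..<n} \<and> card K = t \<and> inj_on (\<lambda>a. a mod l) K} \<le> card (cliques G {0..<n} t)"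
proof (rule card_inj_on_le)
  let ?Tg = "{K. K \<subseteq> {0..<n} \<and> card K = t \<and> inj_on (\<lambda>a. a mod l) K}"
  show "inj_on (image f) ?Tg" using inj_on_image_Pow[OF inj] by (rule inj_on_subset) auto
  show "image f ` ?Tg \<subseteq> cliques G {0..<n} t"
  proof
    fix K' assume "K' \<in> image f ` ?Tg"
    then obtain K where K: "K \<subseteq> {0..<n}" "card K = t" "inj_on (\<lambda>a. a mod l) K" "K' = f ` K" by auto
    have "K' \<subseteq> {0..<n}" using K im by auto
    moreover have "card K' = t" using K inj_on_subset[OF inj K(1)] by (simp add: card_image)
    moreover have "clq G K'" unfolding clq_def
    proof (intro ballI impI)
      fix x y assume "x \<in> K'" "y \<in> K'" "x \<noteq> y"
      then obtain a b where ab: "a \<in> K" "b \<in> K" "x = f a" "y = f b" using K by auto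
      hence "a \<noteq> b" using \<open>x \<noteq> y\<close> by auto
      hence "a mod l \<noteq> b mod l" using K(3) ab by (auto simp: inj_on_def)
      moreover have "a < n" "b < n" using ab K by auto
      ultimately show "G x y" using E ab by auto
    qed
    ultimately show "K' \<in> cliques G {0..<n} t" by (simp add: cliques_def)
  qed
  show "finite (cliques G {0..<n} t)" by (rule finite_cliques) (rule finite_atLeastLessThan)
qed

lemma pp_prod:
  assumes "r \<ge> 1" "t \<ge> 1"
  shows "(\<Prod>j = 1..t - 1. 1 - real j / (real (Suc r) - 1)) = pp r t"
proof -
  have rp: "real r > 0" using assms by simp
  have "pp r t = (\<Prod>i = 0..<t. real r - real i) / real r ^ t" by (simp add: pp_def bfix)
  also have "\<dots> = (\<Prod>i = 0..<t. (real r - real i) / real r)" by (simp add: prod_dividef)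
  also have "\<dots> = (\<Prod>i = 0..<t. 1 - real i / real r)"
    by (rule prod.cong) (use rp in \<open>simp_all add: field_simps\<close>)
  also have "{0..<t} = insert 0 {1..t - 1}" using assms by auto
  also have "(\<Prod>i\<in>insert 0 {1..t - 1}. 1 - real i / real r) = (\<Prod>i = 1..t - 1. 1 - real i / real r)"
    by (subst prod.insert) auto
  finally show ?thesis by simp
qed

lemma Sup_ins0:
  fixes S :: "nat set"
  shows "Sup (insert 0 (enat ` S)) = (if S = {} then 0 else if finite S then enat (Max S) else \<infinity>)"
proof -
  have ne: "insert 0 (enat ` S) \<noteq> {}" by simp
  show ?thesis
  proof (cases "finite S")
    case True
    hence fA: "finite (insert 0 (enat ` S))" by simp
    show ?thesis
    proof (cases "S = {}")
      case True thus ?thesis by (simp add: Sup_enat_def)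
    next
      case False
      have "Max (insert 0 (enat ` S)) = enat (Max S)"
      proof (rule Max_eqI[OF fA])
        show "enat (Max S) \<in> insert 0 (enat ` S)" using Max_in[OF \<open>finite S\<close> False] by auto
        fix y assume "y \<in> insert 0 (enat ` S)"
        thus "y \<le> enat (Max S)" using Max_ge[OF \<open>finite S\<close>] by (auto simp: zero_enat_def)
      qed
      thus ?thesis using fA False True by (simp add: Sup_enat_def)
    qed
  next
    case False
    hence "infinite (insert 0 (enat ` S))" by (auto dest: finite_imageD simp: inj_on_def)
    thus ?thesis using False by (auto simp: Sup_enat_def)
  qed
qed

lemma blowup:
  assumes N: "N \<in> models_n ar T n" and fvI: "fv (I ()) \<subseteq> {..<2}"
    and P1: "\<forall>i<Suc r. P i \<subseteq> {0..<n} \<and> card (P i) = n0"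
    and P2: "\<forall>i<Suc r. \<forall>j<Suc r. i \<noteq> j \<longrightarrow> P i \<inter> P j = {}"
    and P3: "\<forall>i<Suc r. \<forall>j<Suc r. i \<noteq> j \<longrightarrow> (\<forall>a\<in>P i. \<forall>b\<in>P j. gr I N a b)"
  shows "\<exists>N'\<in>models_n ar T n0. subgraph (turan_graph n0 (Suc r)) (interp ar_graph I N')"
proof -
  define c where "c = Suc r"
  define e where "e = (\<lambda>i. SOME h. bij_betw h {0..<n0} (P i))"
  have e: "bij_betw (e i) {0..<n0} (P i)" if "i < c" for i
  proof -
    have "P i \<subseteq> {0..<n}" using P1 that by (auto simp: c_def)
    hence "finite (P i)" using finite_subset by blast
    then obtain h where "bij_betw h {0..<card (P i)} (P i)" using ex_bij_betw_nat_finite by blast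
    hence "\<exists>h. bij_betw h {0..<n0} (P i)" using P1 that by (auto simp: c_def)
    thus ?thesis unfolding e_def by (rule someI_ex)
  qed
  define \<phi> where "\<phi> = (\<lambda>a. e (a mod c) (a div c))"
  have cpos: "c > 0" by (simp add: c_def)
  have phiP: "\<phi> a \<in> P (a mod c)" if "a < n0" for a
  proof -
    have "a div c < n0" using that cpos by (meson div_le_dividend le_less_trans)
    moreover have "a mod c < c" using cpos by simp
    ultimately show ?thesis using e[of "a mod c"] by (auto simp: \<phi>_def bij_betw_def)
  qed
  have injphi: "inj_on \<phi> {0..<n0}"
  proof (rule inj_onI)
    fix a b assume a: "a \<in> {0..<n0}" and b: "b \<in> {0..<n0}" and eq: "\<phi> a = \<phi> b"
    have am: "a mod c < c" "b mod c < c" using cpos by auto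
    have same: "a mod c = b mod c"
    proof (rule ccontr)
      assume "a mod c \<noteq> b mod c"
      hence "P (a mod c) \<inter> P (b mod c) = {}" using P2 am by (auto simp: c_def)
      thus False using phiP[of a] phiP[of b] a b eq by auto
    qed
    have "a div c < n0" "b div c < n0" using a b cpos by (auto intro: le_less_trans div_le_dividend)
    moreover have "e (a mod c) (a div c) = e (a mod c) (b div c)" using eq same by (simp add: \<phi>_def)
    ultimately have "a div c = b div c" using e[OF am(1)] by (auto simp: bij_betw_def inj_on_def)
    thus "a = b" using same by (metis div_mult_mod_eq)
  qed
  define U where "U = \<phi> ` {0..<n0}"
  have UV: "U \<subseteq> {0..<n}"
  proof
    fix x assume "x \<in> U"
    then obtain a where a: "a < n0" "x = \<phi> a" by (auto simp: U_def)
    have "a mod c < Suc r" using cpos by (simp add: c_def)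
    thus "x \<in> {0..<n}" using phiP[OF a(1)] a(2) P1 by blast
  qed
  have cU: "card U = n0" using injphi by (simp add: U_def card_image)
  obtain N' h where N': "N' \<in> models_n ar T n0" and h: "bij_betw h U {0..<n0}"
    and hg: "\<forall>a\<in>U. \<forall>b\<in>U. gr I N' (h a) (h b) = gr I N a b"
    using hered[of N ar T n U n0 I, OF N UV cU fvI] by blast
  have fN': "fst N' = {0..<n0}" using N' by (simp add: models_n_def)
  have "subgraph (turan_graph n0 c) (interp ar_graph I N')"
  proof (rule turan_subgraph_intro[OF fN', of "h \<circ> \<phi>"])
    show "inj_on (h \<circ> \<phi>) {0..<n0}" using injphi h by (auto simp: U_def bij_betw_def intro: comp_inj_on)
    show "(h \<circ> \<phi>) ` {0..<n0} \<subseteq> {0..<n0}" using h by (auto simp: U_def bij_betw_def)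
    show "\<forall>a b. a < n0 \<longrightarrow> b < n0 \<longrightarrow> a mod c \<noteq> b mod c \<longrightarrow> gr I N' ((h \<circ> \<phi>) a) ((h \<circ> \<phi>) b)"
    proof (intro allI impI)
      fix a b assume ab: "a < n0" "b < n0" "a mod c \<noteq> b mod c"
      have m: "a mod c < Suc r" "b mod c < Suc r" using cpos by (auto simp: c_def)
      have "gr I N (\<phi> a) (\<phi> b)" using P3[rule_format, OF m(1) m(2) ab(3) phiP[OF ab(1)] phiP[OF ab(2)]] .
      moreover have "\<phi> a \<in> U" "\<phi> b \<in> U" using ab by (auto simp: U_def)
      ultimately show "gr I N' ((h \<circ> \<phi>) a) ((h \<circ> \<phi>) b)" using hg by simp
    qed
  qed
  thus ?thesis using N' by (auto simp: c_def)
qed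

theorem theorem3p1:
  fixes ar :: "'p::finite \<Rightarrow> nat" and T :: "'p qf set" and I :: "unit \<Rightarrow> 'p qf" and t :: nat
  assumes "language ar"
    and "canonical_theory ar T"
    and "open_interp ar_graph ar T_Graph T I"
    and "t \<ge> 1"
  shows "(turan_seq ar T I t \<longlongrightarrow>
           (if chi ar T I \<ge> 2 then
              (case chi ar T I of
                 \<infinity> \<Rightarrow> 1
               | enat c \<Rightarrow> ereal (\<Prod>j = 1..t - 1. 1 - real j / (real c - 1)))
            else -\<infinity>)) sequentially"
proof -
  have fvI: "fv (I ()) \<subseteq> {..<2}" using assms(3) by (auto simp: open_interp_def ar_graph_def)
  define S where "S = {l. l \<ge> 1 \<and> (\<forall>n. \<exists>N\<in>models_n ar T n. subgraph (turan_graph n l) (interp ar_graph I N))}"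
  have chiS: "chi ar T I = Sup (insert 0 (enat ` S)) + 1" by (simp add: chi_def S_def)
  define dn where "dn = (\<lambda>N::('p, nat) struc. ind_density (complete_graph t) (interp ar_graph I N))"
  have tsd: "turan_seq ar T I t n = Sup ((\<lambda>N. ereal (dn N)) ` models_n ar T n)" for n
    by (simp add: turan_seq_def dn_def)
  have fstN: "fst N = {0..<n}" if "N \<in> models_n ar T n" for N n using that by (simp add: models_n_def)
  have dn_eq: "dn N = real (card (cliques (gr I N) {0..<n} t)) / real (n choose t)" if "N \<in> models_n ar T n" for N n
    unfolding dn_def by (rule dens_eq[OF fstN[OF that]])
  have ts_le1: "turan_seq ar T I t n \<le> 1" for n
    unfolding tsd
  proof (rule Sup_least)
    fix x assume "x \<in> (\<lambda>N. ereal (dn N)) ` models_n ar T n"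
    then obtain N where N: "N \<in> models_n ar T n" "x = ereal (dn N)" by auto
    have "dn N \<le> 1" unfolding dn_def by (rule dens_le1[OF fstN[OF N(1)]])
    thus "x \<le> 1" using N(2) by simp
  qed
  have propag: "models_n ar T n = {}" if e: "models_n ar T n0 = {}" and nn: "n \<ge> n0" for n n0
  proof (rule ccontr)
    assume "models_n ar T n \<noteq> {}"
    then obtain N where N: "N \<in> models_n ar T n" by blast
    have "{0..<n0} \<subseteq> {0..<n}" "card {0..<n0} = n0" using nn by auto
    from hered[of N ar T n "{0..<n0}" n0 I, OF N this fvI] e show False by blast
  qed
  show ?thesis
  proof (cases "S = {}")
    case True
    have chi1: "chi ar T I = 1" unfolding chiS Sup_ins0 using True by simp
    have "1 \<notin> S" using True by simp
    then obtain n0 where n0: "\<forall>N\<in>models_n ar T n0. \<not> subgraph (turan_graph n0 1) (interp ar_graph I N)"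
      by (auto simp: S_def)
    have e0: "models_n ar T n0 = {}"
    proof (rule ccontr)
      assume "models_n ar T n0 \<noteq> {}"
      then obtain N where N: "N \<in> models_n ar T n0" by blast
      have "subgraph (turan_graph n0 1) (interp ar_graph I N)"
        by (rule turan_subgraph_intro[OF fstN[OF N], of id]) auto
      thus False using n0 N by blast
    qed
    have "eventually (\<lambda>n. turan_seq ar T I t n = -\<infinity>) sequentially"
      unfolding eventually_sequentially
    proof (intro exI[of _ n0] allI impI)
      fix n assume "n \<ge> n0"
      hence "models_n ar T n = {}" by (rule propag[OF e0])
      thus "turan_seq ar T I t n = -\<infinity>" unfolding tsd by (simp add: bot_ereal_def)
    qed
    hence "turan_seq ar T I t \<longlonglongrightarrow> -\<infinity>" by (rule tendsto_eventually)
    thus ?thesis using chi1 by simp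
  next
    case ne: False
    show ?thesis
    proof (cases "finite S")
      case False
      have chiinf: "chi ar T I = \<infinity>" unfolding chiS Sup_ins0 using False ne by simp
      have ev: "turan_seq ar T I t n = 1" if nt: "n \<ge> t" for n
      proof (rule antisym[OF ts_le1])
        obtain l where l: "l \<in> S" "l \<ge> n" using False infinite_nat_iff_unbounded_le by blast
        hence "\<forall>n. \<exists>N\<in>models_n ar T n. subgraph (turan_graph n l) (interp ar_graph I N)" by (simp add: S_def)
        then obtain N where N: "N \<in> models_n ar T n" and sg: "subgraph (turan_graph n l) (interp ar_graph I N)"
          by blast
        obtain f where f: "inj_on f {0..<n}" "f ` {0..<n} \<subseteq> {0..<n}"
          "\<forall>a b. a < n \<longrightarrow> b < n \<longrightarrow> a mod l \<noteq> b mod l \<longrightarrow> gr I N (f a) (f b)"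
          using subgraph_turan[OF fstN[OF N] sg] by blast
        have fim: "f ` {0..<n} = {0..<n}"
          by (rule card_subset_eq[OF finite_atLeastLessThan f(2)]) (simp add: card_image f(1))
        have allc: "cliques (gr I N) {0..<n} t = csets {0..<n} t"
        proof -
          have "clq (gr I N) K" if "K \<subseteq> {0..<n}" for K
            unfolding clq_def
          proof (intro ballI impI)
            fix x y assume "x \<in> K" "y \<in> K" "x \<noteq> y"
            hence "x \<in> f ` {0..<n}" "y \<in> f ` {0..<n}" using that fim by auto
            then obtain a b where ab: "a < n" "b < n" "x = f a" "y = f b" by auto
            hence "a \<noteq> b" using \<open>x \<noteq> y\<close> by auto
            hence "a mod l \<noteq> b mod l" using ab l(2) by simp
            thus "gr I N x y" using f(3) ab by auto
          qed
          thus ?thesis by (auto simp: cliques_def csets_def)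
        qed
        have "dn N = 1"
          using dn_eq[OF N] allc nt by (simp add: card_csets)
        hence "ereal (dn N) \<le> turan_seq ar T I t n"
          unfolding tsd using N by (metis (mono_tags, lifting) Sup_upper image_eqI)
        thus "1 \<le> turan_seq ar T I t n" using \<open>dn N = 1\<close> by (simp add: one_ereal_def)
      qed
      have "eventually (\<lambda>n. turan_seq ar T I t n = 1) sequentially"
        unfolding eventually_sequentially using ev by blast
      hence "turan_seq ar T I t \<longlonglongrightarrow> 1" by (rule tendsto_eventually)
      thus ?thesis using chiinf by simp
    next
      case True
      define r where "r = Max S"
      have rS: "r \<in> S" using Max_in[OF True ne] by (simp add: r_def)
      have r1: "r \<ge> 1" using rS by (simp add: S_def)
      have nS: "Suc r \<notin> S" using Max_ge[OF True, of "Suc r"] by (auto simp: r_def)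
      have chir: "chi ar T I = enat (Suc r)" unfolding chiS Sup_ins0 using True ne by (simp add: r_def eSuc_enat[symmetric] plus_1_eSuc)
      have target: "(if chi ar T I \<ge> 2 then
              (case chi ar T I of
                 \<infinity> \<Rightarrow> 1
               | enat c \<Rightarrow> ereal (\<Prod>j = 1..t - 1. 1 - real j / (real c - 1)))
            else -\<infinity>) = ereal (pp r t)"
        using chir r1 pp_prod[OF r1 assms(4)] by (simp add: numeral_eq_enat)
      obtain n0 where n0: "\<forall>N\<in>models_n ar T n0. \<not> subgraph (turan_graph n0 (Suc r)) (interp ar_graph I N)"
        using nS by (auto simp: S_def)
      have rall: "\<forall>n. \<exists>N\<in>models_n ar T n. subgraph (turan_graph n r) (interp ar_graph I N)"
        using rS by (simp add: S_def)
      have "turan_seq ar T I t \<longlonglongrightarrow> ereal (pp r t)"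
      proof (rule order_tendstoI)
        fix a assume a: "a < ereal (pp r t)"
        obtain z where z: "a < z" "z < ereal (pp r t)" using dense[OF a] by blast
        obtain y where y: "z = ereal y" using z by (cases z) auto
        define \<epsilon> where "\<epsilon> = pp r t - y"
        have ep: "\<epsilon> > 0" using z y by (simp add: \<epsilon>_def)
        obtain N0 where N0: "\<forall>n\<ge>N0. real (r choose t) * real (n div r) ^ t / real (n choose t) \<ge> pp r t - \<epsilon>"
          using turan_lower_asym[OF r1 ep, of t] by blast
        show "eventually (\<lambda>n. a < turan_seq ar T I t n) sequentially"
          unfolding eventually_sequentially
        proof (intro exI[of _ N0] allI impI)
          fix n assume n: "N0 \<le> n"
          obtain N where N: "N \<in> models_n ar T n" and sg: "subgraph (turan_graph n r) (interp ar_graph I N)"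
            using rall by blast
          obtain f where f: "inj_on f {0..<n}" "f ` {0..<n} \<subseteq> {0..<n}"
            "\<forall>a b. a < n \<longrightarrow> b < n \<longrightarrow> a mod r \<noteq> b mod r \<longrightarrow> gr I N (f a) (f b)"
            using subgraph_turan[OF fstN[OF N] sg] by blast
          have "real (r choose t) * real (n div r) ^ t \<le> real (card {K. K \<subseteq> {0..<n} \<and> card K = t \<and> inj_on (\<lambda>a. a mod r) K})"
            by (rule turan_count[OF r1])
          also have "\<dots> \<le> real (card (cliques (gr I N) {0..<n} t))"
            using clique_lower[OF f(1) f(2) f(3), of t] by simp
          finally have "real (r choose t) * real (n div r) ^ t / real (n choose t) \<le> dn N"
            unfolding dn_eq[OF N] by (rule divide_right_mono) simp
          hence "pp r t - \<epsilon> \<le> dn N" using N0 n by force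
          hence "z \<le> ereal (dn N)" using y by (simp add: \<epsilon>_def)
          also have "ereal (dn N) \<le> turan_seq ar T I t n"
            unfolding tsd using N by (metis (mono_tags, lifting) Sup_upper image_eqI)
          finally show "a < turan_seq ar T I t n" using z(1) by simp
        qed
      next
        fix b assume b: "ereal (pp r t) < b"
        obtain z where z: "ereal (pp r t) < z" "z < b" using dense[OF b] by blast
        obtain y where y: "z = ereal y" using z by (cases z) auto
        define \<epsilon> where "\<epsilon> = y - pp r t"
        have ep: "\<epsilon> > 0" using z y by (simp add: \<epsilon>_def)
        obtain n1 where n1: "\<forall>(V::nat set) G. finite V \<and> card V \<ge> n1 \<and>
           real (card (cliques G V t)) \<ge> (pp r t + \<epsilon>) * real (card V choose t) \<longrightarrow>
           (\<exists>P. (\<forall>i<Suc r. P i \<subseteq> V \<and> card (P i) = n0) \<and> (\<forall>i<Suc r. \<forall>j<Suc r. i \<noteq> j \<longrightarrow> P i \<inter> P j = {}) \<and>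
                (\<forall>i<Suc r. \<forall>j<Suc r. i \<noteq> j \<longrightarrow> (\<forall>a\<in>P i. \<forall>b\<in>P j. G a b)))"
          using erdos_stone_clique[OF r1 ep, of t n0] by (rule exE) (rule that)
        show "eventually (\<lambda>n. turan_seq ar T I t n < b) sequentially"
          unfolding eventually_sequentially
        proof (intro exI[of _ "n1 + t"] allI impI)
          fix n assume n: "n1 + t \<le> n"
          have "turan_seq ar T I t n \<le> ereal (pp r t + \<epsilon>)"
            unfolding tsd
          proof (rule Sup_least)
            fix x assume "x \<in> (\<lambda>N. ereal (dn N)) ` models_n ar T n"
            then obtain N where N: "N \<in> models_n ar T n" "x = ereal (dn N)" by auto
            have "dn N \<le> pp r t + \<epsilon>"
            proof (rule ccontr)
              assume "\<not> ?thesis"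
              hence gt: "dn N > pp r t + \<epsilon>" by simp
              have bpos: "real (n choose t) > 0" using n by simp
              have "real (card (cliques (gr I N) {0..<n} t)) \<ge> (pp r t + \<epsilon>) * real (card {0..<n} choose t)"
                using gt bpos unfolding dn_eq[OF N(1)] by (simp add: field_simps)
              then obtain P where P: "\<forall>i<Suc r. P i \<subseteq> {0..<n} \<and> card (P i) = n0"
                "\<forall>i<Suc r. \<forall>j<Suc r. i \<noteq> j \<longrightarrow> P i \<inter> P j = {}"
                "\<forall>i<Suc r. \<forall>j<Suc r. i \<noteq> j \<longrightarrow> (\<forall>a\<in>P i. \<forall>b\<in>P j. gr I N a b)"
                using n1[rule_format, of "{0..<n}" "gr I N"] n by auto
              from blowup[OF N(1) fvI P] n0 show False by blast
            qed
            thus "x \<le> ereal (pp r t + \<epsilon>)" using N(2) by simp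
          qed
          also have "ereal (pp r t + \<epsilon>) = z" using y by (simp add: \<epsilon>_def)
          finally show "turan_seq ar T I t n < b" using z(2) by simp
        qed
      qed
      thus ?thesis using target by simp
    qed
  qed
qed


end
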